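(* Let $p$ be an even positive integer. Then there exists a unique (up to isomorphism) graph of order $p+2$ and size $\mathrm{ex}(p+2,B_p)+1$ which contains exactly one copy of $B_p$, and there exists a unique (up to isomorphism) graph of order $p+3$ and size $\mathrm{ex}(p+3,B_p)+1$ which contains exactly one copy of $B_p$.
   Context: All graphs are finite and simple. The order of a graph is its number of vertices and its size is its number of edges. A copy of $H$ in $G$ is a subgraph of $G$ isomorphic to $H$; the number of copies of $H$ in $G$ is the number of distinct subgraphs of $G$ isomorphic to $H$. For a graph $H$ and a positive integer $n$, the Turán number $\mathrm{ex}(n,H)$ is the maximum size of a simple graph of order $n$ containing no copy of $H$. The book $B_p$ with $p$ pages is the graph consisting of $p$ triangles sharing a common edge (so $B_p$ has $p+2$ vertices and $2p+1$ edges). *)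

theory Defs
  imports Main
begin

definition graph :: "'a set \<Rightarrow> 'a set set \<Rightarrow> bool" where
  "graph V E \<longleftrightarrow> finite V \<and> E \<subseteq> {{x, y} | x y. x \<in> V \<and> y \<in> V \<and> x \<noteq> y}"

definition graph_iso :: "'a set \<Rightarrow> 'a set set \<Rightarrow> 'b set \<Rightarrow> 'b set set \<Rightarrow> bool" where
  "graph_iso V1 E1 V2 E2 \<longleftrightarrow>
     (\<exists>f. bij_betw f V1 V2 \<and>
          (\<forall>x\<in>V1. \<forall>y\<in>V1. {x, y} \<in> E1 \<longleftrightarrow> {f x, f y} \<in> E2))"

definition copies :: "'b set \<Rightarrow> 'b set set \<Rightarrow> 'a set \<Rightarrow> 'a set set \<Rightarrow> ('a set \<times> 'a set set) set" where
  "copies VH EH V E = {(W, F). W \<subseteq> V \<and> F \<subseteq> E \<and> graph W F \<and> graph_iso W F VH EH}"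

definition num_copies :: "'b set \<Rightarrow> 'b set set \<Rightarrow> 'a set \<Rightarrow> 'a set set \<Rightarrow> nat" where
  "num_copies VH EH V E = card (copies VH EH V E)"

definition ex :: "nat \<Rightarrow> 'b set \<Rightarrow> 'b set set \<Rightarrow> nat" where
  "ex n VH EH = Max {card E | E. graph {0..<n} E \<and> copies VH EH {0..<n} E = {}}"

text \<open>The book B_p: vertices 0..p+1, spine edge {0,1}, pages {0,i},{1,i} for 2 \<le> i \<le> p+1.\<close>
definition book_V :: "nat \<Rightarrow> nat set" where
  "book_V p = {0..<p+2}"

definition book_E :: "nat \<Rightarrow> nat set set" where
  "book_E p = insert {0, 1} ({{0, i} | i. i \<in> {2..<p+2}} \<union> {{1, i} | i. i \<in> {2..<p+2}})"

definition extremal_one_book :: "nat \<Rightarrow> nat \<Rightarrow> 'a set \<Rightarrow> 'a set set \<Rightarrow> bool" where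
  "extremal_one_book p n V E \<longleftrightarrow>
     graph V E \<and> card V = n \<and> card E = ex n (book_V p) (book_E p) + 1 \<and>
     num_copies (book_V p) (book_E p) V E = 1"

end

theory Submission
  imports Defs
begin

definition all2 :: "'a set \<Rightarrow> 'a set set" where
  "all2 V = {{x, y} | x y. x \<in> V \<and> y \<in> V \<and> x \<noteq> y}"

definition nb :: "'a set set \<Rightarrow> 'a set \<Rightarrow> 'a \<Rightarrow> 'a set" where
  "nb H V x = {y \<in> V. {x, y} \<in> H}"

definition bookshape :: "'a \<Rightarrow> 'a \<Rightarrow> 'a set \<Rightarrow> 'a set set" where
  "bookshape u v S = insert {u, v} ((\<lambda>w. {u, w}) ` S \<union> (\<lambda>w. {v, w}) ` S)"

lemma mem_all2: "{x, y} \<in> all2 V \<longleftrightarrow> x \<in> V \<and> y \<in> V \<and> x \<noteq> y"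
  unfolding all2_def by (auto simp: doubleton_eq_iff)

lemma single_notin_all2: "{x} \<notin> all2 V"
  unfolding all2_def by (auto simp: doubleton_eq_iff)

lemma all2_alt: "all2 V = {e. e \<subseteq> V \<and> card e = 2}"
  unfolding all2_def by (auto simp: card_2_iff)

lemma card_all2: "finite V \<Longrightarrow> card (all2 V) = card V choose 2"
  by (simp add: all2_alt n_subsets)

lemma finite_all2: "finite V \<Longrightarrow> finite (all2 V)"
  unfolding all2_alt by (rule finite_subset[of _ "Pow V"]) auto

lemma graph_all2: "graph V E \<longleftrightarrow> finite V \<and> E \<subseteq> all2 V"
  unfolding graph_def all2_def by simp

lemma card_E_H:
  assumes "graph V E"
  shows "card E = (card V choose 2) - card (all2 V - E)"
proof -
  have f: "finite V" "E \<subseteq> all2 V" using assms by (auto simp: graph_all2)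
  have "card (all2 V - E) = card (all2 V) - card E"
    using f by (simp add: card_Diff_subset finite_all2 finite_subset)
  moreover have "card E \<le> card (all2 V)" using f by (simp add: card_mono finite_all2)
  moreover have "card (all2 V) = card V choose 2" using f by (simp add: card_all2)
  ultimately show ?thesis by linarith
qed

lemma nb_sym: "y \<in> nb H V x \<Longrightarrow> x \<in> V \<Longrightarrow> x \<in> nb H V y"
  unfolding nb_def by (auto simp: insert_commute)

lemma nb_sub: "H \<subseteq> all2 V \<Longrightarrow> nb H V x \<subseteq> V - {x}"
  unfolding nb_def using single_notin_all2 by fastforce

lemma finite_nb: "finite V \<Longrightarrow> finite (nb H V x)"
  unfolding nb_def by auto

lemma card_nb_edges:
  assumes "H \<subseteq> all2 V" "x \<in> V"
  shows "card (nb H V x) = card {e \<in> H. x \<in> e}"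
proof -
  have "bij_betw (\<lambda>y. {x, y}) (nb H V x) {e \<in> H. x \<in> e}"
  proof (rule bij_betwI')
    show "\<And>a b. a \<in> nb H V x \<Longrightarrow> b \<in> nb H V x \<Longrightarrow> ({x, a} = {x, b}) = (a = b)"
      by (auto simp: doubleton_eq_iff)
    show "\<And>a. a \<in> nb H V x \<Longrightarrow> {x, a} \<in> {e \<in> H. x \<in> e}" by (auto simp: nb_def)
    fix e assume e: "e \<in> {e \<in> H. x \<in> e}"
    then obtain a b where ab: "e = {a, b}" "a \<in> V" "b \<in> V" using assms unfolding all2_def by blast
    show "\<exists>y\<in>nb H V x. e = {x, y}"
    proof (cases "a = x")
      case True then show ?thesis using e ab by (auto simp: nb_def)
    next
      case False then have "b = x" using e ab by auto
      then show ?thesis using e ab by (auto simp: nb_def insert_commute)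
    qed
  qed
  then show ?thesis by (rule bij_betw_same_card)
qed

lemma handshake:
  assumes "finite V" "H \<subseteq> all2 V"
  shows "(\<Sum>x\<in>V. card (nb H V x)) = 2 * card H"
proof -
  have fH: "finite H" using assms finite_all2 finite_subset by blast
  have "(\<Sum>x\<in>V. card (nb H V x)) = (\<Sum>x\<in>V. card {e \<in> H. x \<in> e})"
    by (rule sum.cong[OF refl], rule card_nb_edges[OF assms(2)])
  also have "\<dots> = (\<Sum>x\<in>V. \<Sum>e\<in>H. if x \<in> e then 1 else 0)"
  proof (intro sum.cong refl)
    fix x show "card {e \<in> H. x \<in> e} = (\<Sum>e\<in>H. if x \<in> e then 1 else 0)"
      using sum.inter_filter[OF fH, of "\<lambda>_. 1::nat" "\<lambda>e. x \<in> e"] by simp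
  qed
  also have "\<dots> = (\<Sum>e\<in>H. \<Sum>x\<in>V. if x \<in> e then 1 else 0)"
    by (rule sum.swap)
  also have "\<dots> = (\<Sum>e\<in>H. 2)"
  proof (intro sum.cong refl)
    fix e assume "e \<in> H"
    then have "e \<in> all2 V" using assms(2) by blast
    then have "e \<subseteq> V" "card e = 2" by (simp_all add: all2_alt)
    then have "{x \<in> V. x \<in> e} = e" by blast
    then show "(\<Sum>x\<in>V. if x \<in> e then 1 else 0) = (2::nat)"
      using sum.inter_filter[OF assms(1), of "\<lambda>_. 1::nat" "\<lambda>x. x \<in> e"] \<open>card e = 2\<close> by simp
  qed
  finally show ?thesis by simp
qed


lemma mem_bookE: "{a, b} \<in> book_E p \<longleftrightarrow>
   (a = 0 \<and> b = 1) \<or> (a = 1 \<and> b = 0) \<or> ((a = 0 \<or> a = 1) \<and> 2 \<le> b \<and> b < p + 2) \<or>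
   ((b = 0 \<or> b = 1) \<and> 2 \<le> a \<and> a < p + 2)"
  unfolding book_E_def by (simp add: doubleton_eq_iff; blast)

lemma mem_bookshape: "{a, b} \<in> bookshape u v S \<longleftrightarrow>
   (a = u \<and> b = v) \<or> (a = v \<and> b = u) \<or> (a = u \<and> b \<in> S) \<or> (b = u \<and> a \<in> S) \<or>
   (a = v \<and> b \<in> S) \<or> (b = v \<and> a \<in> S)"
  unfolding bookshape_def by (simp add: doubleton_eq_iff image_iff; blast)

lemma bookshape_sym: "bookshape u v S = bookshape v u S"
  unfolding bookshape_def by (auto simp: insert_commute)

lemma bookshape_neq:
  assumes "v \<noteq> u'" "v \<noteq> v'" "z \<in> S" "z \<noteq> u'" "z \<noteq> v'"
  shows "bookshape u v S \<noteq> bookshape u' v' S'"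
proof
  assume eq: "bookshape u v S = bookshape u' v' S'"
  have "{v, z} \<in> bookshape u v S" using assms(3) by (simp add: mem_bookshape)
  then have "{v, z} \<in> bookshape u' v' S'" using eq by simp
  then show False using assms by (simp add: mem_bookshape)
qed

lemma copy_spine:
  assumes G: "graph V E" and C: "(W, F) \<in> copies (book_V p) (book_E p) V E"
  shows "\<exists>u v S. u \<in> V \<and> v \<in> V \<and> u \<noteq> v \<and> {u, v} \<in> E \<and> S \<subseteq> V - {u, v} \<and> finite S \<and>
     card S = p \<and> (\<forall>w\<in>S. {u, w} \<in> E \<and> {v, w} \<in> E) \<and> W = insert u (insert v S) \<and>
     F = bookshape u v S"
proof -
  have WV: "W \<subseteq> V" and FE: "F \<subseteq> E" and gW: "graph W F" and iso: "graph_iso W F {0..<p+2} (book_E p)"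
    using C by (auto simp: copies_def book_V_def)
  obtain f where bij: "bij_betw f W {0..<p+2}" and
    fe: "\<forall>x\<in>W. \<forall>y\<in>W. {x, y} \<in> F \<longleftrightarrow> {f x, f y} \<in> book_E p"
    using iso unfolding graph_iso_def by blast
  define g where "g = inv_into W f"
  have gb: "bij_betw g {0..<p+2} W" unfolding g_def by (rule bij_betw_inv_into[OF bij])
  have gW': "\<And>i. i < p + 2 \<Longrightarrow> g i \<in> W" using gb bij_betwE by fastforce
  have fg: "\<And>i. i < p + 2 \<Longrightarrow> f (g i) = i" unfolding g_def using bij
    by (simp add: bij_betw_inv_into_right)
  have gf: "\<And>x. x \<in> W \<Longrightarrow> g (f x) = x" unfolding g_def using bij
    by (simp add: bij_betw_inv_into_left)
  have fW: "\<And>x. x \<in> W \<Longrightarrow> f x < p + 2" using bij bij_betwE by fastforce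
  define u where "u = g 0"
  define v where "v = g 1"
  define S where "S = g ` {2..<p+2}"
  have uW: "u \<in> W" and vW: "v \<in> W" using gW' u_def v_def by auto
  have fu: "f u = 0" and fv: "f v = 1" using fg u_def v_def by auto
  have uv: "u \<noteq> v" using fu fv by auto
  have SW: "S \<subseteq> W" using gW' S_def by auto
  have fS: "\<And>w. w \<in> S \<Longrightarrow> 2 \<le> f w \<and> f w < p + 2" using fg S_def by auto
  have Suv: "u \<notin> S" "v \<notin> S" using fS fu fv by fastforce+
  have cardS: "card S = p"
  proof -
    have "{2..<p+2} \<subseteq> {0..<p+2}" by auto
    then have "inj_on g {2..<p+2}" using gb unfolding bij_betw_def using inj_on_subset by blast
    then show ?thesis unfolding S_def by (simp add: card_image)
  qed
  have Weq: "W = insert u (insert v S)"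
  proof
    show "insert u (insert v S) \<subseteq> W" using uW vW SW by auto
    show "W \<subseteq> insert u (insert v S)"
    proof
      fix x assume x: "x \<in> W"
      have "x = g (f x)" using gf x by simp
      moreover have "f x < p + 2" using fW x by simp
      ultimately show "x \<in> insert u (insert v S)"
      proof (cases "f x = 0 \<or> f x = 1")
        case False
        then have "f x \<in> {2..<p+2}" using \<open>f x < p + 2\<close> by auto
        then show ?thesis using \<open>x = g (f x)\<close> unfolding S_def by (metis image_eqI insertCI)
      qed (auto simp: u_def v_def)
    qed
  qed
  have Feq: "F = bookshape u v S"
  proof
    show "F \<subseteq> bookshape u v S"
    proof
      fix e assume e: "e \<in> F"
      then obtain x y where xy: "e = {x, y}" "x \<in> W" "y \<in> W" "x \<noteq> y"
        using gW unfolding graph_def by blast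
      have "{f x, f y} \<in> book_E p" using fe xy e by blast
      then have c: "(f x = 0 \<and> f y = 1) \<or> (f x = 1 \<and> f y = 0) \<or> ((f x = 0 \<or> f x = 1) \<and> 2 \<le> f y \<and> f y < p + 2) \<or>
        ((f y = 0 \<or> f y = 1) \<and> 2 \<le> f x \<and> f x < p + 2)" by (simp add: mem_bookE)
      have xs: "x = g (f x)" "y = g (f y)" using gf xy by auto
      have inS: "\<And>z. z \<in> W \<Longrightarrow> 2 \<le> f z \<Longrightarrow> z \<in> S" unfolding S_def
        using gf fW by (metis atLeastLessThan_iff image_eqI)
      have "(x = u \<and> y = v) \<or> (x = v \<and> y = u) \<or> (x = u \<and> y \<in> S) \<or> (y = u \<and> x \<in> S) \<or>
        (x = v \<and> y \<in> S) \<or> (y = v \<and> x \<in> S)"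
        using c xs inS xy u_def v_def by metis
      then show "e \<in> bookshape u v S" unfolding xy(1) by (simp add: mem_bookshape)
    qed
    show "bookshape u v S \<subseteq> F"
    proof
      fix e assume "e \<in> bookshape u v S"
      then obtain w where "e = {u, v} \<or> (w \<in> S \<and> (e = {u, w} \<or> e = {v, w}))"
        unfolding bookshape_def by blast
      then show "e \<in> F"
      proof (elim disjE conjE)
        assume "e = {u, v}"
        then show ?thesis using fe uW vW fu fv by (simp add: mem_bookE)
      next
        assume "w \<in> S" "e = {u, w}"
        then show ?thesis using fe uW SW fu fS[of w] by (auto simp: mem_bookE)
      next
        assume "w \<in> S" "e = {v, w}"
        then show ?thesis using fe vW SW fv fS[of w] by (auto simp: mem_bookE)
      qed
    qed
  qed
  have finS: "finite S" unfolding S_def by simp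
  have "{u, v} \<in> E" "\<forall>w\<in>S. {u, w} \<in> E \<and> {v, w} \<in> E"
    using FE Feq unfolding bookshape_def by auto
  then show ?thesis using uW vW WV SW Suv uv cardS Weq Feq finS
    by (intro exI[of _ u] exI[of _ v] exI[of _ S]) auto
qed


lemma spine_copy:
  assumes G: "graph V E" and uV: "u \<in> V" and vV: "v \<in> V" and uv: "u \<noteq> v" and e: "{u, v} \<in> E"
    and SV: "S \<subseteq> V - {u, v}" and cS: "card S = p"
    and nbrs: "\<forall>w\<in>S. {u, w} \<in> E \<and> {v, w} \<in> E"
  shows "(insert u (insert v S), bookshape u v S) \<in> copies (book_V p) (book_E p) V E"
proof -
  have finV: "finite V" using G by (simp add: graph_def)
  have finS: "finite S" using SV finV finite_subset by blast
  obtain h where h: "bij_betw h S {2..<p+2}"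
    using finite_same_card_bij[OF finS, of "{2..<p+2}"] cS by auto
  have hS: "\<And>w. w \<in> S \<Longrightarrow> 2 \<le> h w \<and> h w < p + 2" using h bij_betwE by fastforce
  have hinj: "\<And>x y. x \<in> S \<Longrightarrow> y \<in> S \<Longrightarrow> h x = h y \<Longrightarrow> x = y"
    using h unfolding bij_betw_def inj_on_def by blast
  have uS: "u \<notin> S" and vS: "v \<notin> S" using SV by auto
  define W where "W = insert u (insert v S)"
  define f where "f = (\<lambda>x. if x = u then 0 else if x = v then 1 else h x)"
  have fu: "f u = 0" and fv: "f v = 1" and fS: "\<And>w. w \<in> S \<Longrightarrow> f w = h w"
    using uv uS vS unfolding f_def by auto
  have bij: "bij_betw f W {0..<p+2}"
  proof -
    have "f ` S = h ` S" using fS by simp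
    also have "\<dots> = {2..<p+2}" using h by (simp add: bij_betw_def)
    finally have fSi: "f ` S = {2..<p+2}" .
    have "f ` W = {0..<p+2}"
    proof -
      have "f ` W = insert 0 (insert 1 (f ` S))" unfolding W_def using fu fv by simp
      also have "\<dots> = {0..<p+2}" using fSi by auto
      finally show ?thesis .
    qed
    moreover have "inj_on f W"
    proof (rule inj_onI)
      fix x y assume x: "x \<in> W" and y: "y \<in> W" and fxy: "f x = f y"
      show "x = y"
      proof (cases "x \<in> S")
        case True
        then show ?thesis
        proof (cases "y \<in> S")
          case True then show ?thesis using \<open>x \<in> S\<close> fxy fS hinj by metis
        next
          case False then have "y = u \<or> y = v" using y W_def by auto
          then show ?thesis using fxy fS[OF \<open>x \<in> S\<close>] hS[OF \<open>x \<in> S\<close>] fu fv by auto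
        qed
      next
        case False then have xx: "x = u \<or> x = v" using x W_def by auto
        show ?thesis
        proof (cases "y \<in> S")
          case True then show ?thesis using xx fxy fS hS fu fv by force
        next
          case False then have "y = u \<or> y = v" using y W_def by auto
          then show ?thesis using xx fxy fu fv by auto
        qed
      qed
    qed
    ultimately show ?thesis unfolding bij_betw_def by blast
  qed
  have edges: "\<forall>x\<in>W. \<forall>y\<in>W. {x, y} \<in> bookshape u v S \<longleftrightarrow> {f x, f y} \<in> book_E p"
  proof (intro ballI)
    fix x y assume x: "x \<in> W" and y: "y \<in> W"
    have x3: "x = u \<or> x = v \<or> x \<in> S" and y3: "y = u \<or> y = v \<or> y \<in> S" using x y W_def by auto
    show "{x, y} \<in> bookshape u v S \<longleftrightarrow> {f x, f y} \<in> book_E p"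
      unfolding mem_bookshape mem_bookE
      using x3 y3 fu fv fS hS uv uS vS by (elim disjE; force)
  qed
  have gr: "graph W (bookshape u v S)"
    unfolding graph_all2
  proof
    show "finite W" using finS W_def by simp
    show "bookshape u v S \<subseteq> all2 W"
    proof
      fix e assume "e \<in> bookshape u v S"
      then obtain w where "e = {u, v} \<or> (w \<in> S \<and> (e = {u, w} \<or> e = {v, w}))"
        unfolding bookshape_def by blast
      then show "e \<in> all2 W"
      proof (elim disjE conjE)
        assume "e = {u, v}" then show ?thesis using uv W_def by (simp add: mem_all2)
      next
        assume "w \<in> S" "e = {u, w}" then show ?thesis using uS W_def by (auto simp add: mem_all2)
      next
        assume "w \<in> S" "e = {v, w}" then show ?thesis using vS W_def by (auto simp add: mem_all2)
      qed
    qed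
  qed
  have sub1: "W \<subseteq> V" using W_def uV vV SV by auto
  have sub2: "bookshape u v S \<subseteq> E" unfolding bookshape_def using e nbrs by auto
  have "graph_iso W (bookshape u v S) (book_V p) (book_E p)"
    unfolding graph_iso_def book_V_def using bij edges by blast
  then show ?thesis unfolding copies_def W_def using sub1 sub2 gr W_def by auto
qed


lemma two_copies_False:
  assumes "card X = 1" "a \<in> X" "b \<in> X" "a \<noteq> b" shows False
proof -
  obtain x where "X = {x}" using assms(1) card_1_singleton_iff by (metis One_nat_def)
  then show False using assms by auto
qed

lemma nb_Un_sub:
  assumes "H \<subseteq> all2 V" "u \<in> V" "v \<in> V" "{u, v} \<notin> H"
  shows "nb H V u \<union> nb H V v \<subseteq> V - {u, v}"
proof -
  have "nb H V u \<subseteq> V - {u}" "nb H V v \<subseteq> V - {v}" using nb_sub assms(1) by metis+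
  moreover have "v \<notin> nb H V u" "u \<notin> nb H V v" using assms(4) unfolding nb_def
    by (auto simp: insert_commute)
  ultimately show ?thesis by blast
qed

lemma card_C:
  assumes "finite V" "H \<subseteq> all2 V" "u \<in> V" "v \<in> V" "u \<noteq> v" "{u, v} \<notin> H"
  shows "card (V - {u, v} - (nb H V u \<union> nb H V v)) = card V - 2 - card (nb H V u \<union> nb H V v)"
proof -
  have s: "nb H V u \<union> nb H V v \<subseteq> V - {u, v}" using nb_Un_sub assms by metis
  have "card (V - {u, v}) = card V - 2" using assms by (simp add: card_Diff_subset)
  moreover have "finite (nb H V u \<union> nb H V v)" using finite_nb[OF assms(1)] by simp
  ultimately show ?thesis using s by (simp add: card_Diff_subset)
qed

lemma copy_from_pair:
  assumes G: "graph V E" and H: "H = all2 V - E" and uV: "u \<in> V" and vV: "v \<in> V" and uv: "u \<noteq> v"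
    and nH: "{u, v} \<notin> H" and S: "S \<subseteq> V - {u, v} - (nb H V u \<union> nb H V v)" and cS: "card S = p"
  shows "(insert u (insert v S), bookshape u v S) \<in> copies (book_V p) (book_E p) V E"
proof (rule spine_copy[OF G uV vV uv _ _ cS])
  show "{u, v} \<in> E" using nH H uV vV uv by (simp add: mem_all2)
  show "S \<subseteq> V - {u, v}" using S by blast
  show "\<forall>w\<in>S. {u, w} \<in> E \<and> {v, w} \<in> E"
  proof
    fix w assume w: "w \<in> S"
    then have wV: "w \<in> V" "w \<noteq> u" "w \<noteq> v" "w \<notin> nb H V u" "w \<notin> nb H V v" using S by auto
    then have "{u, w} \<notin> H" "{v, w} \<notin> H" unfolding nb_def by auto
    then show "{u, w} \<in> E \<and> {v, w} \<in> E" using H wV uV vV by (auto simp: mem_all2)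
  qed
qed

lemma copy_necessary:
  assumes G: "graph V E" and H: "H = all2 V - E" and C: "c \<in> copies (book_V p) (book_E p) V E"
  shows "\<exists>u v S. u \<in> V \<and> v \<in> V \<and> u \<noteq> v \<and> {u, v} \<notin> H \<and> S \<subseteq> V - {u, v} \<and>
     card S = p \<and> S \<inter> (nb H V u \<union> nb H V v) = {} \<and>
     card (nb H V u \<union> nb H V v) + p + 2 \<le> card V \<and>
     c = (insert u (insert v S), bookshape u v S)"
proof -
  obtain W F where c: "c = (W, F)" by fastforce
  obtain u v S where uvS: "u \<in> V" "v \<in> V" "u \<noteq> v" "{u, v} \<in> E" "S \<subseteq> V - {u, v}" "finite S"
     "card S = p" "\<forall>w\<in>S. {u, w} \<in> E \<and> {v, w} \<in> E" "W = insert u (insert v S)" "F = bookshape u v S"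
    using copy_spine[OF G] C c by blast
  have finV: "finite V" using G by (simp add: graph_def)
  have HA: "H \<subseteq> all2 V" using H by blast
  have nH: "{u, v} \<notin> H" using H uvS by blast
  have dis: "S \<inter> (nb H V u \<union> nb H V v) = {}"
    using uvS(8) H unfolding nb_def by blast
  have s: "nb H V u \<union> nb H V v \<subseteq> V - {u, v}" using nb_Un_sub[OF HA uvS(1,2) nH] .
  have "S \<union> (nb H V u \<union> nb H V v) \<subseteq> V - {u, v}" using s uvS(5) by blast
  then have "card (S \<union> (nb H V u \<union> nb H V v)) \<le> card (V - {u, v})"
    using finV by (simp add: card_mono)
  moreover have "card (S \<union> (nb H V u \<union> nb H V v)) = card S + card (nb H V u \<union> nb H V v)"
    using dis uvS(6) finite_nb[OF finV] by (simp add: card_Un_disjoint)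
  moreover have "card (V - {u, v}) = card V - 2" using uvS finV by (simp add: card_Diff_subset)
  moreover have "card {u, v} \<le> card V" using uvS finV by (intro card_mono) auto
  ultimately have "card (nb H V u \<union> nb H V v) + p + 2 \<le> card V" using uvS(7) uvS(3)
    by simp
  then show ?thesis using uvS nH dis c by blast
qed


lemma sum_ge_card:
  assumes "finite A" "\<forall>y\<in>A. 1 \<le> f y" shows "card A \<le> (sum f A :: nat)"
proof -
  have "(\<Sum>y\<in>A. 1) \<le> sum f A" using assms by (intro sum_mono) auto
  then show ?thesis by simp
qed

lemma sum_ge_pt:
  assumes "finite A" "\<forall>y\<in>A. 1 \<le> f y" "x \<in> A" shows "f x + (card A - 1) \<le> (sum f A :: nat)"
proof -
  have "sum f A = f x + sum f (A - {x})" using assms by (simp add: sum.remove)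
  moreover have "card (A - {x}) \<le> sum f (A - {x})" using assms by (intro sum_ge_card) auto
  moreover have "card (A - {x}) = card A - 1" using assms by simp
  ultimately show ?thesis by simp
qed

lemma sum_ge_pt2:
  assumes "finite A" "\<forall>y\<in>A. 1 \<le> f y" "x \<in> A" "y \<in> A" "x \<noteq> y"
  shows "f x + f y + (card A - 2) \<le> (sum f A :: nat)"
proof -
  have "sum f A = f x + sum f (A - {x})" using assms by (simp add: sum.remove)
  moreover have "y \<in> A - {x}" using assms by simp
  then have "f y + (card (A - {x}) - 1) \<le> sum f (A - {x})" using assms by (intro sum_ge_pt) auto
  moreover have "card (A - {x}) = card A - 1" using assms by simp
  ultimately show ?thesis by simp
qed

lemma exists_copy:
  assumes G: "graph V E" and H: "H = all2 V - E" and uV: "u \<in> V" and vV: "v \<in> V" and uv: "u \<noteq> v"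
    and nH: "{u, v} \<notin> H" and c: "card (nb H V u \<union> nb H V v) + p + 2 \<le> card V"
  shows "\<exists>S. S \<subseteq> V - {u, v} - (nb H V u \<union> nb H V v) \<and> card S = p \<and>
     (insert u (insert v S), bookshape u v S) \<in> copies (book_V p) (book_E p) V E"
proof -
  have finV: "finite V" using G by (simp add: graph_def)
  have HA: "H \<subseteq> all2 V" using H by blast
  have "p \<le> card (V - {u, v} - (nb H V u \<union> nb H V v))"
    using card_C[OF finV HA uV vV uv nH] c by simp
  then obtain S where S: "S \<subseteq> V - {u, v} - (nb H V u \<union> nb H V v)" "card S = p"
    using obtain_subset_with_card_n by metis
  then show ?thesis using copy_from_pair[OF G H uV vV uv nH S] by blast
qed

lemma two_copies:
  assumes G: "graph V E" and H: "H = all2 V - E" and uV: "u \<in> V" and vV: "v \<in> V" and uv: "u \<noteq> v"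
    and nH: "{u, v} \<notin> H" and c: "card (nb H V u \<union> nb H V v) + p + 3 \<le> card V"
    and p0: "0 < p"
  shows "\<exists>c1 c2. c1 \<in> copies (book_V p) (book_E p) V E \<and> c2 \<in> copies (book_V p) (book_E p) V E \<and> c1 \<noteq> c2"
proof -
  have finV: "finite V" using G by (simp add: graph_def)
  have HA: "H \<subseteq> all2 V" using H by blast
  have "Suc p \<le> card (V - {u, v} - (nb H V u \<union> nb H V v))"
    using card_C[OF finV HA uV vV uv nH] c by simp
  then obtain T where T: "T \<subseteq> V - {u, v} - (nb H V u \<union> nb H V v)" "card T = Suc p" "finite T"
    using obtain_subset_with_card_n by metis
  obtain a where a: "a \<in> T" using T(2) by fastforce
  have "card (T - {a}) = p" using T a by simp
  then have "T - {a} \<noteq> {}" using p0 by (metis card.empty less_irrefl)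
  then obtain b where b: "b \<in> T" "b \<noteq> a" by blast
  show ?thesis
  proof -
    define S1 where "S1 = T - {a}"
    define S2 where "S2 = T - {b}"
    have c1: "(insert u (insert v S1), bookshape u v S1) \<in> copies (book_V p) (book_E p) V E"
      using copy_from_pair[OF G H uV vV uv nH, of S1] T a unfolding S1_def by auto
    have c2: "(insert u (insert v S2), bookshape u v S2) \<in> copies (book_V p) (book_E p) V E"
      using copy_from_pair[OF G H uV vV uv nH, of S2] T b unfolding S2_def by auto
    have "b \<in> insert u (insert v S1)" using b S1_def by auto
    moreover have "b \<notin> insert u (insert v S2)" using b T S2_def by auto
    ultimately show ?thesis using c1 c2 by blast
  qed
qed


lemma nb_empty_pair:
  assumes "nb H V u = {}" "v \<in> V" shows "{u, v} \<notin> H"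
  using assms unfolding nb_def by auto

lemma free_bound2:
  assumes G: "graph V E" and H: "H = all2 V - E" and n: "card V = p + 2" and pk: "p = 2 * k"
    and nc: "copies (book_V p) (book_E p) V E = {}"
  shows "k + 1 \<le> card H"
proof -
  have finV: "finite V" using G by (simp add: graph_def)
  have HA: "H \<subseteq> all2 V" using H by blast
  define A where "A = {x \<in> V. nb H V x = {}}"
  have finA: "finite A" using finV A_def by simp
  have "\<forall>u\<in>A. \<forall>v\<in>A. u = v"
  proof (intro ballI, rule ccontr)
    fix u v assume u: "u \<in> A" and v: "v \<in> A" and uv: "u \<noteq> v"
    have uV: "u \<in> V" "nb H V u = {}" and vV: "v \<in> V" "nb H V v = {}" using u v A_def by auto
    have nH: "{u, v} \<notin> H" using nb_empty_pair uV vV by metis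
    have "card (nb H V u \<union> nb H V v) + p + 2 \<le> card V" using uV vV n by simp
    then show False using exists_copy[OF G H uV(1) vV(1) uv nH] nc by blast
  qed
  then have cA: "card A \<le> 1" using card_le_Suc0_iff_eq[OF finA] by simp
  have AV: "A \<subseteq> V" using A_def by auto
  have "card (V - A) \<le> (\<Sum>x\<in>V - A. card (nb H V x))"
  proof (rule sum_ge_card)
    show "finite (V - A)" using finV by simp
    show "\<forall>y\<in>V - A. 1 \<le> card (nb H V y)"
      using A_def finite_nb[OF finV] by (auto simp: card_gt_0_iff Suc_le_eq)
  qed
  also have "\<dots> \<le> (\<Sum>x\<in>V. card (nb H V x))" using finV by (intro sum_mono2) auto
  also have "\<dots> = 2 * card H" using handshake[OF finV HA] .
  finally have "card (V - A) \<le> 2 * card H" .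
  moreover have "card (V - A) = card V - card A" using finA AV by (simp add: card_Diff_subset)
  ultimately show ?thesis using cA n pk by linarith
qed

lemma free_bound3:
  assumes G: "graph V E" and H: "H = all2 V - E" and n: "card V = p + 3" and pk: "p = 2 * k"
    and p0: "0 < p" and nc: "copies (book_V p) (book_E p) V E = {}"
  shows "k + 3 \<le> card H"
proof -
  have finV: "finite V" using G by (simp add: graph_def)
  have HA: "H \<subseteq> all2 V" using H by blast
  have K: "\<And>u v. u \<in> V \<Longrightarrow> v \<in> V \<Longrightarrow> u \<noteq> v \<Longrightarrow> {u, v} \<notin> H \<Longrightarrow> 2 \<le> card (nb H V u \<union> nb H V v)"
  proof (rule ccontr)
    fix u v assume uV: "u \<in> V" and vV: "v \<in> V" and uv: "u \<noteq> v" and nH: "{u, v} \<notin> H"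
      and c: "\<not> 2 \<le> card (nb H V u \<union> nb H V v)"
    have "card (nb H V u \<union> nb H V v) + p + 2 \<le> card V" using c n by simp
    then show False using exists_copy[OF G H uV vV uv nH] nc by blast
  qed
  have hs: "(\<Sum>x\<in>V. card (nb H V x)) = 2 * card H" using handshake[OF finV HA] .
  show ?thesis
  proof (cases "\<exists>w\<in>V. nb H V w = {}")
    case True
    then obtain w where w: "w \<in> V" "nb H V w = {}" by blast
    have "\<forall>v\<in>V - {w}. 2 \<le> card (nb H V v)"
    proof
      fix v assume v: "v \<in> V - {w}"
      have "2 \<le> card (nb H V w \<union> nb H V v)"
        using K[of w v] w v nb_empty_pair[OF w(2), of v] by auto
      then show "2 \<le> card (nb H V v)" using w by simp
    qed
    then have "(\<Sum>x\<in>V - {w}. 2) \<le> (\<Sum>x\<in>V - {w}. card (nb H V x))" by (intro sum_mono) auto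
    also have "\<dots> \<le> (\<Sum>x\<in>V. card (nb H V x))" using finV by (intro sum_mono2) auto
    finally have "2 * (card V - 1) \<le> 2 * card H" using hs w finV by simp
    then show ?thesis using n pk p0 by linarith
  next
    case False
    then have ge1: "\<forall>y\<in>V. 1 \<le> card (nb H V y)"
      using finite_nb[OF finV] by (auto simp: card_gt_0_iff Suc_le_eq)
    have s1: "card V \<le> 2 * card H" using sum_ge_card[OF finV ge1] hs by simp
    show ?thesis
    proof (rule ccontr)
      assume "\<not> k + 3 \<le> card H"
      then have s2: "2 * card H = card V + 1" using s1 n pk by presburger
      have "\<exists>x\<in>V. 2 \<le> card (nb H V x)"
      proof (rule ccontr)
        assume "\<not> (\<exists>x\<in>V. 2 \<le> card (nb H V x))"
        then have "\<forall>x\<in>V. card (nb H V x) = 1" using ge1 by force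
        then have "(\<Sum>x\<in>V. card (nb H V x)) = card V" by simp
        then show False using hs s2 by simp
      qed
      then obtain x where x: "x \<in> V" "2 \<le> card (nb H V x)" by blast
      have cx: "card (nb H V x) = 2"
      proof (rule ccontr)
        assume "card (nb H V x) \<noteq> 2"
        then have "3 \<le> card (nb H V x)" using x by simp
        then show False using sum_ge_pt[OF finV ge1 x(1)] hs s2 n by linarith
      qed
      have cy: "\<And>y. y \<in> V \<Longrightarrow> y \<noteq> x \<Longrightarrow> card (nb H V y) = 1"
      proof (rule ccontr)
        fix y assume y: "y \<in> V" "y \<noteq> x" and ne: "card (nb H V y) \<noteq> 1"
        then have "2 \<le> card (nb H V y)" using ge1 by force
        then show False using sum_ge_pt2[OF finV ge1 x(1) y(1)] y x hs s2 n by (simp add: eq_commute[of y x])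
      qed
      obtain a c where ac: "nb H V x = {a, c}" "a \<noteq> c" using cx card_2_iff by metis
      have aV: "a \<in> V" "c \<in> V" "a \<noteq> x" "c \<noteq> x" using ac nb_sub[OF HA, of x] by auto
      have "a \<in> nb H V x" "c \<in> nb H V x" using ac by auto
      then have xa: "x \<in> nb H V a" "x \<in> nb H V c" using nb_sym[OF _ x(1)] by auto
      have na: "nb H V a = {x}"
        using cy[OF aV(1) aV(3)] xa(1) by (metis card_1_singleton_iff One_nat_def singletonD)
      have nc': "nb H V c = {x}"
        using cy[OF aV(2) aV(4)] xa(2) by (metis card_1_singleton_iff One_nat_def singletonD)
      have "{a, c} \<notin> H" using na aV unfolding nb_def by auto
      then have "2 \<le> card (nb H V a \<union> nb H V c)" using K aV ac by blast
      then show False using na nc' by simp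
    qed
  qed
qed


lemma ex_of_card: "1 \<le> card A \<Longrightarrow> \<exists>x. x \<in> A"
  by (metis card.empty ex_in_conv not_one_le_zero)

lemma three_elems:
  assumes "finite A" "3 \<le> card A"
  obtains u v w where "u \<in> A" "v \<in> A" "w \<in> A" "u \<noteq> v" "u \<noteq> w" "v \<noteq> w"
proof -
  obtain u where u: "u \<in> A" using assms ex_of_card[of A] by fastforce
  have "2 \<le> card (A - {u})" using assms u by simp
  then obtain v where v: "v \<in> A - {u}" using ex_of_card[of "A - {u}"] by fastforce
  have "1 \<le> card (A - {u} - {v})" using assms u v by simp
  then obtain w where w: "w \<in> A - {u} - {v}" using ex_of_card[of "A - {u} - {v}"] by fastforce
  show ?thesis using that u v w by blast
qed

lemma uniq2:
  assumes G: "graph V E" and H: "H = all2 V - E" and n: "card V = p + 2" and pk: "p = 2 * k"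
    and p0: "0 < p" and cH: "card H = k" and c1: "card (copies (book_V p) (book_E p) V E) = 1"
  shows "\<exists>u v. u \<in> V \<and> v \<in> V \<and> u \<noteq> v \<and> nb H V u = {} \<and> nb H V v = {} \<and>
           (\<forall>y\<in>V - {u, v}. card (nb H V y) = 1)"
proof -
  have finV: "finite V" using G by (simp add: graph_def)
  have HA: "H \<subseteq> all2 V" using H by blast
  define A where "A = {x \<in> V. nb H V x = {}}"
  have finA: "finite A" using finV A_def by simp
  have AV: "A \<subseteq> V" using A_def by auto
  have cA: "card A \<le> 2"
  proof (rule ccontr)
    assume "\<not> card A \<le> 2"
    then obtain u v w where uvw: "u \<in> A" "v \<in> A" "w \<in> A" "u \<noteq> v" "u \<noteq> w" "v \<noteq> w"
      using three_elems[OF finA] by (metis not_less_eq_eq numeral_3_eq_3 numeral_2_eq_2)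
    have V: "u \<in> V" "v \<in> V" "w \<in> V" and N: "nb H V u = {}" "nb H V v = {}" "nb H V w = {}"
      using uvw A_def by auto
    have "card (V - {u, v}) = p" using n V uvw finV by (simp add: card_Diff_subset)
    then have cp1: "(insert u (insert v (V - {u, v})), bookshape u v (V - {u, v})) \<in> copies (book_V p) (book_E p) V E"
      using copy_from_pair[OF G H V(1,2) uvw(4) nb_empty_pair[OF N(1) V(2)], of "V - {u, v}"] N by simp
    have "card (V - {u, w}) = p" using n V uvw finV by (simp add: card_Diff_subset)
    then have cp2: "(insert u (insert w (V - {u, w})), bookshape u w (V - {u, w})) \<in> copies (book_V p) (book_E p) V E"
      using copy_from_pair[OF G H V(1,3) uvw(5) nb_empty_pair[OF N(1) V(3)], of "V - {u, w}"] N by simp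
    have "card (V - {u, v, w}) \<noteq> 0" using n V uvw finV p0 pk by (simp add: card_Diff_subset)
    then obtain z where z: "z \<in> V - {u, v, w}" using ex_of_card[of "V - {u, v, w}"] by fastforce
    have "bookshape u v (V - {u, v}) \<noteq> bookshape u w (V - {u, w})"
      using bookshape_neq[of v u w z "V - {u, v}"] uvw z by auto
    then show False using two_copies_False[OF c1 cp1 cp2] by auto
  qed
  have hs: "(\<Sum>x\<in>V. card (nb H V x)) = 2 * card H" using handshake[OF finV HA] .
  have sA: "(\<Sum>x\<in>V. card (nb H V x)) = (\<Sum>x\<in>V - A. card (nb H V x))"
  proof -
    have "(\<Sum>x\<in>V. card (nb H V x)) = (\<Sum>x\<in>V - A. card (nb H V x)) + (\<Sum>x\<in>A. card (nb H V x))"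
      using sum.subset_diff[OF AV finV] by simp
    moreover have "(\<Sum>x\<in>A. card (nb H V x)) = 0" using A_def by simp
    ultimately show ?thesis by simp
  qed
  have ge1: "\<forall>y\<in>V - A. 1 \<le> card (nb H V y)"
    using A_def finite_nb[OF finV] by (auto simp: card_gt_0_iff Suc_le_eq)
  have finVA: "finite (V - A)" using finV by simp
  have cVA: "card (V - A) = card V - card A" using finA AV by (simp add: card_Diff_subset)
  have all1: "\<forall>y\<in>V - A. card (nb H V y) = 1"
  proof (rule ccontr)
    assume "\<not> (\<forall>y\<in>V - A. card (nb H V y) = 1)"
    then obtain y where y: "y \<in> V - A" "2 \<le> card (nb H V y)" using ge1 by force
    have "card (nb H V y) + (card (V - A) - 1) \<le> (\<Sum>x\<in>V - A. card (nb H V x))"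
      using sum_ge_pt[OF finVA ge1 y(1)] .
    then show False using y cVA cA hs sA cH n pk by linarith
  qed
  then have "(\<Sum>x\<in>V - A. card (nb H V x)) = card (V - A)" by simp
  then have "card A = 2" using cVA cA hs sA cH n pk by linarith
  then obtain u v where uv: "A = {u, v}" "u \<noteq> v" using card_2_iff by metis
  have "u \<in> V" "v \<in> V" "nb H V u = {}" "nb H V v = {}" using uv A_def by auto
  moreover have "\<forall>y\<in>V - {u, v}. card (nb H V y) = 1" using all1 uv by simp
  ultimately show ?thesis using uv by blast
qed


lemma uniq3:
  assumes G: "graph V E" and H: "H = all2 V - E" and n: "card V = p + 3" and pk: "p = 2 * k"
    and p0: "0 < p" and cH: "card H = k + 2" and c1: "card (copies (book_V p) (book_E p) V E) = 1"
  shows "\<exists>x a c. x \<in> V \<and> a \<in> V \<and> c \<in> V \<and> a \<noteq> c \<and> x \<noteq> a \<and> x \<noteq> c \<and>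
           nb H V x = {a, c} \<and> nb H V a = {x} \<and> nb H V c = {x} \<and>
           (\<forall>y\<in>V - {x, a, c}. card (nb H V y) = 1)"
proof -
  have finV: "finite V" using G by (simp add: graph_def)
  have HA: "H \<subseteq> all2 V" using H by blast
  have hs: "(\<Sum>x\<in>V. card (nb H V x)) = 2 * card H" using handshake[OF finV HA] .
  have noiso: "\<forall>w\<in>V. nb H V w \<noteq> {}"
  proof (rule ccontr)
    assume "\<not> (\<forall>w\<in>V. nb H V w \<noteq> {})"
    then obtain w where w: "w \<in> V" "nb H V w = {}" by blast
    have nHw: "\<And>v. v \<in> V \<Longrightarrow> {w, v} \<notin> H" using nb_empty_pair[OF w(2)] by blast
    have ne: "\<forall>v\<in>V - {w}. nb H V v \<noteq> {}"
    proof (rule ccontr)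
      assume "\<not> (\<forall>v\<in>V - {w}. nb H V v \<noteq> {})"
      then obtain v where v: "v \<in> V" "v \<noteq> w" "nb H V v = {}" by blast
      have "card (nb H V w \<union> nb H V v) + p + 3 \<le> card V" using w v n by simp
      then obtain d1 d2 where "d1 \<in> copies (book_V p) (book_E p) V E"
        "d2 \<in> copies (book_V p) (book_E p) V E" "d1 \<noteq> d2"
        using two_copies[OF G H w(1) v(1) _ nHw[OF v(1)] _ p0] v by metis
      then show False using two_copies_False[OF c1] by blast
    qed
    define L where "L = {v \<in> V - {w}. card (nb H V v) \<le> 1}"
    have finL: "finite L" using finV L_def by simp
    have LV: "L \<subseteq> V - {w}" using L_def by auto
    have cL: "card L \<le> 1"
    proof -
      have "\<forall>v1\<in>L. \<forall>v2\<in>L. v1 = v2"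
      proof (intro ballI, rule ccontr)
        fix v1 v2 assume v1: "v1 \<in> L" and v2: "v2 \<in> L" and d: "v1 \<noteq> v2"
        have V1: "v1 \<in> V" "v1 \<noteq> w" "card (nb H V v1) \<le> 1" using v1 L_def by auto
        have V2: "v2 \<in> V" "v2 \<noteq> w" "card (nb H V v2) \<le> 1" using v2 L_def by auto
        have "card (nb H V w \<union> nb H V v1) + p + 2 \<le> card V" using w V1 n by simp
        then obtain S1 where S1: "S1 \<subseteq> V - {w, v1} - (nb H V w \<union> nb H V v1)" "card S1 = p"
          "(insert w (insert v1 S1), bookshape w v1 S1) \<in> copies (book_V p) (book_E p) V E"
          using exists_copy[OF G H w(1) V1(1) _ nHw[OF V1(1)]] V1 by metis
        have "card (nb H V w \<union> nb H V v2) + p + 2 \<le> card V" using w V2 n by simp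
        then obtain S2 where S2: "S2 \<subseteq> V - {w, v2} - (nb H V w \<union> nb H V v2)" "card S2 = p"
          "(insert w (insert v2 S2), bookshape w v2 S2) \<in> copies (book_V p) (book_E p) V E"
          using exists_copy[OF G H w(1) V2(1) _ nHw[OF V2(1)]] V2 by metis
        have finS1: "finite S1" using S1(1) finV finite_subset by blast
        have "card S1 - card {v2} \<le> card (S1 - {v2})" by (rule diff_card_le_card_Diff) simp
        then have "1 \<le> card (S1 - {v2})" using S1(2) p0 pk by simp
        then obtain z where z: "z \<in> S1 - {v2}" using ex_of_card[of "S1 - {v2}"] by fastforce
        have "bookshape w v1 S1 \<noteq> bookshape w v2 S2"
          using bookshape_neq[of v1 w v2 z S1] V1 d z S1(1) by auto
        then show False using two_copies_False[OF c1 S1(3) S2(3)] by auto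
      qed
      then show ?thesis using card_le_Suc0_iff_eq[OF finL] by simp
    qed
    have finVw: "finite (V - {w})" using finV by simp
    have s1: "(\<Sum>x\<in>V - {w}. card (nb H V x)) = (\<Sum>x\<in>V - {w} - L. card (nb H V x)) + (\<Sum>x\<in>L. card (nb H V x))"
      using sum.subset_diff[OF LV finVw] by simp
    have "\<forall>y\<in>L. 1 \<le> card (nb H V y)"
      using ne LV finite_nb[OF finV] by (auto simp: card_gt_0_iff Suc_le_eq)
    then have "card L \<le> (\<Sum>x\<in>L. card (nb H V x))"
      by (rule sum_ge_card[OF finL])
    moreover have "(\<Sum>x\<in>V - {w} - L. 2) \<le> (\<Sum>x\<in>V - {w} - L. card (nb H V x))"
      by (intro sum_mono) (auto simp: L_def)
    moreover have "(\<Sum>x\<in>V - {w}. card (nb H V x)) \<le> (\<Sum>x\<in>V. card (nb H V x))"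
      using finV by (intro sum_mono2) auto
    moreover have "card (V - {w} - L) = card V - 1 - card L"
      using LV finL w finV by (simp add: card_Diff_subset)
    ultimately have "2 * (card V - 1 - card L) + card L \<le> 2 * card H" using s1 hs by simp
    then show False using cL cH n pk p0 by arith
  qed
  have ge1: "\<forall>y\<in>V. 1 \<le> card (nb H V y)"
    using noiso finite_nb[OF finV] by (auto simp: card_gt_0_iff Suc_le_eq)
  have s2: "2 * card H = card V + 1" using cH n pk by simp
  have "\<exists>x\<in>V. 2 \<le> card (nb H V x)"
  proof (rule ccontr)
    assume "\<not> (\<exists>x\<in>V. 2 \<le> card (nb H V x))"
    then have "\<forall>x\<in>V. card (nb H V x) = 1" using ge1 by force
    then have "(\<Sum>x\<in>V. card (nb H V x)) = card V" by simp
    then show False using hs s2 by simp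
  qed
  then obtain x where x: "x \<in> V" "2 \<le> card (nb H V x)" by blast
  have cx: "card (nb H V x) = 2"
  proof (rule ccontr)
    assume "card (nb H V x) \<noteq> 2"
    then have "3 \<le> card (nb H V x)" using x by simp
    then show False using sum_ge_pt[OF finV ge1 x(1)] hs s2 n by linarith
  qed
  have cy: "\<And>y. y \<in> V \<Longrightarrow> y \<noteq> x \<Longrightarrow> card (nb H V y) = 1"
  proof (rule ccontr)
    fix y assume y: "y \<in> V" "y \<noteq> x" and ne: "card (nb H V y) \<noteq> 1"
    then have "2 \<le> card (nb H V y)" using ge1 by force
    then show False using sum_ge_pt2[OF finV ge1 x(1) y(1)] y x hs s2 n by (simp add: eq_commute[of y x])
  qed
  obtain a c where ac: "nb H V x = {a, c}" "a \<noteq> c" using cx card_2_iff by metis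
  have aV: "a \<in> V" "c \<in> V" "a \<noteq> x" "c \<noteq> x" using ac nb_sub[OF HA, of x] by auto
  have "a \<in> nb H V x" "c \<in> nb H V x" using ac by auto
  then have xa: "x \<in> nb H V a" "x \<in> nb H V c" using nb_sym[OF _ x(1)] by auto
  have na: "nb H V a = {x}"
    using cy[OF aV(1) aV(3)] xa(1) by (metis card_1_singleton_iff One_nat_def singletonD)
  have nc': "nb H V c = {x}"
    using cy[OF aV(2) aV(4)] xa(2) by (metis card_1_singleton_iff One_nat_def singletonD)
  have "\<forall>y\<in>V - {x, a, c}. card (nb H V y) = 1" using cy by auto
  then show ?thesis using x aV ac na nc' by blast
qed


definition tau :: "nat \<Rightarrow> nat" where "tau i = (if even i then i + 1 else i - 1)"

definition Mcan :: "nat \<Rightarrow> nat set set" where "Mcan k = (\<lambda>m. {2 * m, 2 * m + 1}) ` {1..k}"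

lemma tau_props:
  assumes "2 \<le> i" "i < 2 * k + 2"
  shows "2 \<le> tau i" "tau i < 2 * k + 2" "tau i \<noteq> i" "tau (tau i) = i"
proof -
  have "2 \<le> tau i \<and> tau i < 2 * k + 2 \<and> tau i \<noteq> i \<and> tau (tau i) = i"
  proof (cases "even i")
    case True
    then have "i < 2 * k + 1" using assms by presburger
    then show ?thesis using True assms by (simp add: tau_def)
  next
    case False
    then have "i \<ge> 3" "even (i - 1)" using assms by presburger+
    then show ?thesis using False assms by (simp add: tau_def; linarith)
  qed
  then show "2 \<le> tau i" "tau i < 2 * k + 2" "tau i \<noteq> i" "tau (tau i) = i" by auto
qed

lemma tau_inj: "tau i = tau j \<Longrightarrow> i = j"
  unfolding tau_def by (auto split: if_splits elim: oddE evenE) presburger+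

lemma mem_Mcan: "{a, b} \<in> Mcan k \<longleftrightarrow> 2 \<le> a \<and> a < 2 * k + 2 \<and> 2 \<le> b \<and> b < 2 * k + 2 \<and> b = tau a"
proof
  assume "{a, b} \<in> Mcan k"
  then obtain m where m: "1 \<le> m" "m \<le> k" "{a, b} = {2 * m, 2 * m + 1}" unfolding Mcan_def by auto
  then have "(a = 2 * m \<and> b = 2 * m + 1) \<or> (a = 2 * m + 1 \<and> b = 2 * m)" by (simp add: doubleton_eq_iff)
  then show "2 \<le> a \<and> a < 2 * k + 2 \<and> 2 \<le> b \<and> b < 2 * k + 2 \<and> b = tau a"
    using m unfolding tau_def by auto
next
  assume h: "2 \<le> a \<and> a < 2 * k + 2 \<and> 2 \<le> b \<and> b < 2 * k + 2 \<and> b = tau a"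
  show "{a, b} \<in> Mcan k"
  proof (cases "even a")
    case True
    then obtain m where m: "a = 2 * m" by (auto elim: evenE)
    then have "1 \<le> m" "m \<le> k" "b = 2 * m + 1" using h True unfolding tau_def by auto
    then show ?thesis unfolding Mcan_def using m by auto
  next
    case False
    then obtain m where m: "a = 2 * m + 1" by (auto elim: oddE)
    then have "1 \<le> m" "m \<le> k" "b = 2 * m" using h False unfolding tau_def by auto
    then have "{a, b} = {2 * m, 2 * m + 1}" using m by auto
    then show ?thesis unfolding Mcan_def using \<open>1 \<le> m\<close> \<open>m \<le> k\<close> by auto
  qed
qed

lemma card_Mcan: "card (Mcan k) = k"
proof -
  have "inj_on (\<lambda>m. {2 * m, 2 * m + 1 :: nat}) {1..k}"
    by (rule inj_onI) (auto simp: doubleton_eq_iff)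
  then show ?thesis unfolding Mcan_def by (simp add: card_image)
qed

lemma Mcan_sub: "2 * k + 2 \<le> n \<Longrightarrow> Mcan k \<subseteq> all2 {0..<n}"
  unfolding Mcan_def by (auto simp: mem_all2)

lemma match_iso:
  "finite U \<Longrightarrow> card U = 2 * k \<Longrightarrow> (\<forall>y\<in>U. \<sigma> y \<in> U \<and> \<sigma> y \<noteq> y \<and> \<sigma> (\<sigma> y) = y) \<Longrightarrow>
   \<exists>f. bij_betw f U {2..<2 * k + 2} \<and> (\<forall>y\<in>U. f (\<sigma> y) = tau (f y))"
proof (induction k arbitrary: U)
  case 0
  then have "U = {}" by simp
  then show ?case by (simp add: bij_betw_def)
next
  case (Suc k)
  then obtain y0 where y0: "y0 \<in> U" using ex_of_card[of U] by fastforce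
  have s0: "\<sigma> y0 \<in> U" "\<sigma> y0 \<noteq> y0" "\<sigma> (\<sigma> y0) = y0" using Suc.prems y0 by auto
  define U' where "U' = U - {y0, \<sigma> y0}"
  have "y0 \<noteq> \<sigma> y0" using s0 by metis
  then have "card {y0, \<sigma> y0} = 2" by simp
  moreover have "card U' = card U - card {y0, \<sigma> y0}" unfolding U'_def
    using Suc.prems(1) y0 s0 by (intro card_Diff_subset) auto
  ultimately have cU': "card U' = 2 * k" using Suc.prems(2) by simp
  have clos: "\<forall>y\<in>U'. \<sigma> y \<in> U' \<and> \<sigma> y \<noteq> y \<and> \<sigma> (\<sigma> y) = y"
  proof
    fix y assume y: "y \<in> U'"
    then have yU: "y \<in> U" "y \<noteq> y0" "y \<noteq> \<sigma> y0" unfolding U'_def by auto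
    have "\<sigma> y \<noteq> y0" using yU Suc.prems by metis
    moreover have "\<sigma> y \<noteq> \<sigma> y0" using yU Suc.prems y0 by metis
    ultimately show "\<sigma> y \<in> U' \<and> \<sigma> y \<noteq> y \<and> \<sigma> (\<sigma> y) = y" unfolding U'_def using yU Suc.prems by auto
  qed
  obtain f' where f': "bij_betw f' U' {2..<2 * k + 2}" "\<forall>y\<in>U'. f' (\<sigma> y) = tau (f' y)"
    using Suc.IH[OF _ cU' clos] Suc.prems(1) U'_def by auto
  have f'r: "\<And>y. y \<in> U' \<Longrightarrow> 2 \<le> f' y \<and> f' y < 2 * k + 2" using f'(1) bij_betwE by fastforce
  have f'i: "inj_on f' U'" using f'(1) bij_betw_def by blast
  define f where "f = f'(y0 := 2 * k + 2, \<sigma> y0 := 2 * k + 3)"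
  have fa: "f y0 = 2 * k + 2" "f (\<sigma> y0) = 2 * k + 3" using s0 unfolding f_def by auto
  have fb: "\<And>y. y \<in> U' \<Longrightarrow> f y = f' y" unfolding f_def U'_def by auto
  have UU: "U = insert y0 (insert (\<sigma> y0) U')" unfolding U'_def using y0 s0 by auto
  have img: "f ` U = {2..<2 * Suc k + 2}"
  proof -
    have "f ` U' = f' ` U'" using fb by simp
    also have "\<dots> = {2..<2 * k + 2}" using f'(1) by (simp add: bij_betw_def)
    finally have "f ` U = insert (2 * k + 2) (insert (2 * k + 3) {2..<2 * k + 2})" using UU fa by simp
    also have "\<dots> = {2..<2 * Suc k + 2}" by auto
    finally show ?thesis .
  qed
  have inj: "inj_on f U"
  proof (rule inj_onI)
    fix x y assume x: "x \<in> U" and y: "y \<in> U" and e: "f x = f y"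
    have x3: "x = y0 \<or> x = \<sigma> y0 \<or> x \<in> U'" and y3: "y = y0 \<or> y = \<sigma> y0 \<or> y \<in> U'" using x y UU by auto
    show "x = y"
    proof (cases "x \<in> U'")
      case True
      then show ?thesis
      proof (cases "y \<in> U'")
        case True then show ?thesis using \<open>x \<in> U'\<close> e fb f'i inj_on_def by metis
      next
        case False then show ?thesis using y3 e fa fb[OF \<open>x \<in> U'\<close>] f'r[OF \<open>x \<in> U'\<close>] by auto
      qed
    next
      case False
      then show ?thesis using x3 y3 e fa fb f'r by force
    qed
  qed
  have comm: "\<forall>y\<in>U. f (\<sigma> y) = tau (f y)"
  proof
    fix y assume y: "y \<in> U"
    then have y3: "y = y0 \<or> y = \<sigma> y0 \<or> y \<in> U'" using UU by auto
    then show "f (\<sigma> y) = tau (f y)"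
    proof (elim disjE)
      assume "y = y0" then show ?thesis using fa by (simp add: tau_def)
    next
      assume "y = \<sigma> y0" then show ?thesis using fa s0 by (simp add: tau_def)
    next
      assume yU: "y \<in> U'"
      then have "\<sigma> y \<in> U'" using clos by auto
      then show ?thesis using yU fb f'(2) by simp
    qed
  qed
  show ?case using img inj comm unfolding bij_betw_def by blast
qed


lemma compl_graph:
  assumes "finite V" "H \<subseteq> all2 V"
  shows "graph V (all2 V - H)" "all2 V - (all2 V - H) = H"
    "card (all2 V - H) = (card V choose 2) - card H"
proof -
  show g: "graph V (all2 V - H)" using assms by (simp add: graph_all2)
  show e: "all2 V - (all2 V - H) = H" using assms by blast
  show "card (all2 V - H) = (card V choose 2) - card H" using card_E_H[OF g] e by simp
qed

lemma two_in: "finite X \<Longrightarrow> a \<in> X \<Longrightarrow> b \<in> X \<Longrightarrow> a \<noteq> b \<Longrightarrow> 2 \<le> card X"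
proof -
  assume "finite X" "a \<in> X" "b \<in> X" "a \<noteq> b"
  then have "card {a, b} \<le> card X" by (intro card_mono) auto
  then show "2 \<le> card X" using \<open>a \<noteq> b\<close> by simp
qed

lemma nb_mem: "y \<in> nb H V x \<longleftrightarrow> y \<in> V \<and> {x, y} \<in> H" unfolding nb_def by simp

lemma tau_nb:
  assumes "2 \<le> x" "x < 2 * k + 2" "Mcan k \<subseteq> H" "2 * k + 2 \<le> n"
  shows "tau x \<in> nb H {0..<n} x"
proof -
  have "{x, tau x} \<in> Mcan k" using tau_props[OF assms(1,2)] assms by (simp add: mem_Mcan)
  then show ?thesis using tau_props[OF assms(1,2)] assms unfolding nb_mem by auto
qed

lemma free_H0:
  assumes p: "p = 2 * k" "0 < p"
  shows "copies (book_V p) (book_E p) {0..<p+2} (all2 {0..<p+2} - insert {0, 2} (Mcan k)) = {}"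
proof (rule ccontr)
  define V where "V = {0..<p+2}"
  define H where "H = insert {0, 2} (Mcan k)"
  have HA: "H \<subseteq> all2 V" unfolding H_def V_def using Mcan_sub[of k "p+2"] p by (auto simp: mem_all2)
  have finV': "finite V" using V_def by simp
  have G: "graph V (all2 V - H)" by (rule compl_graph(1)[OF finV' HA])
  have HH: "H = all2 V - (all2 V - H)" by (rule compl_graph(2)[OF finV' HA, symmetric])
  assume "copies (book_V p) (book_E p) {0..<p+2} (all2 {0..<p+2} - insert {0, 2} (Mcan k)) \<noteq> {}"
  then obtain c where "c \<in> copies (book_V p) (book_E p) V (all2 V - H)" unfolding V_def H_def by blast
  then obtain u v S where uv: "u \<in> V" "v \<in> V" "u \<noteq> v"
     "card (nb H V u \<union> nb H V v) + p + 2 \<le> card V"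
    using copy_necessary[OF G HH] by blast
  have finV: "finite V" using V_def by simp
  have "card (nb H V u \<union> nb H V v) = 0" using uv V_def by simp
  then have e: "nb H V u = {}" "nb H V v = {}" using finite_nb[OF finV] by auto
  have ne: "\<And>x. x \<in> V \<Longrightarrow> x \<noteq> 1 \<Longrightarrow> nb H V x \<noteq> {}"
  proof -
    fix x assume x: "x \<in> V" "x \<noteq> 1"
    show "nb H V x \<noteq> {}"
    proof (cases "x = 0")
      case True
      have "2 \<in> nb H V x" using True p unfolding nb_mem H_def V_def by auto
      then show ?thesis by blast
    next
      case False
      then have "2 \<le> x" "x < 2 * k + 2" using x V_def p by auto
      then have "tau x \<in> nb H V x" using tau_nb[of x k H "p+2"] p unfolding H_def V_def by auto
      then show ?thesis by blast
    qed
  qed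
  show False using ne[OF uv(1)] ne[OF uv(2)] e uv(3) by auto
qed

lemma copies_H1:
  assumes p: "p = 2 * k" "0 < p"
  shows "copies (book_V p) (book_E p) {0..<p+2} (all2 {0..<p+2} - Mcan k) =
    {(insert 0 (insert 1 {2..<p+2}), bookshape 0 1 {2..<p+2})}"
proof -
  define V where "V = {0..<p+2}"
  define H where "H = Mcan k"
  have HA: "H \<subseteq> all2 V" unfolding H_def V_def using Mcan_sub[of k "p+2"] p by auto
  have finV': "finite V" using V_def by simp
  have G: "graph V (all2 V - H)" by (rule compl_graph(1)[OF finV' HA])
  have HH: "H = all2 V - (all2 V - H)" by (rule compl_graph(2)[OF finV' HA, symmetric])
  have finV: "finite V" using V_def by simp
  have e01: "nb H V 0 = {}" "nb H V 1 = {}" unfolding nb_def H_def by (auto simp: mem_Mcan)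
  have ne: "\<And>x. x \<in> V \<Longrightarrow> 2 \<le> x \<Longrightarrow> nb H V x \<noteq> {}"
  proof -
    fix x assume x: "x \<in> V" "2 \<le> x"
    then have "x < 2 * k + 2" using V_def p by auto
    then have "tau x \<in> nb H V x" using tau_nb[of x k H "p+2"] p x unfolding H_def V_def by auto
    then show "nb H V x \<noteq> {}" by blast
  qed
  have S0: "{2..<p+2} \<subseteq> V - {0, 1} - (nb H V 0 \<union> nb H V 1)" using e01 V_def by auto
  have cS0: "card {2..<p+2} = p" by simp
  have n01: "{0, 1} \<notin> H" using nb_empty_pair[OF e01(1), of 1] V_def by simp
  have in1: "(insert 0 (insert 1 {2..<p+2}), bookshape 0 1 {2..<p+2}) \<in> copies (book_V p) (book_E p) V (all2 V - H)"
    using copy_from_pair[OF G HH _ _ _ n01 S0 cS0] V_def by simp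
  have sub: "copies (book_V p) (book_E p) V (all2 V - H) \<subseteq> {(insert 0 (insert 1 {2..<p+2}), bookshape 0 1 {2..<p+2})}"
  proof
    fix c assume "c \<in> copies (book_V p) (book_E p) V (all2 V - H)"
    then obtain u v S where uv: "u \<in> V" "v \<in> V" "u \<noteq> v" "S \<subseteq> V - {u, v}" "card S = p"
     "card (nb H V u \<union> nb H V v) + p + 2 \<le> card V" "c = (insert u (insert v S), bookshape u v S)"
      using copy_necessary[OF G HH] by blast
    have "card (nb H V u \<union> nb H V v) = 0" using uv V_def by simp
    then have e: "nb H V u = {}" "nb H V v = {}" using finite_nb[OF finV] by auto
    have "u < 2" "v < 2" using ne[OF uv(1)] ne[OF uv(2)] e by (metis not_less)+
    then have uv01: "(u = 0 \<and> v = 1) \<or> (u = 1 \<and> v = 0)" using uv(3) by auto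
    then have "S \<subseteq> {2..<p+2}" using uv(4) V_def by auto
    then have SS: "S = {2..<p+2}" using uv(5) by (intro card_subset_eq) auto
    show "c \<in> {(insert 0 (insert 1 {2..<p+2}), bookshape 0 1 {2..<p+2})}"
      using uv01 uv(7) SS bookshape_sym[of 1 0 "{2..<p+2}"] by (auto simp: insert_commute)
  qed
  show ?thesis using sub in1 unfolding V_def H_def by blast
qed


definition H3 :: "nat \<Rightarrow> nat set set" where
  "H3 k = insert {0, 2 * k + 2} (insert {1, 2 * k + 2} (Mcan k))"

lemma mem_H3: "{a, b} \<in> H3 k \<longleftrightarrow> (a = 0 \<and> b = 2 * k + 2) \<or> (b = 0 \<and> a = 2 * k + 2) \<or>
   (a = 1 \<and> b = 2 * k + 2) \<or> (b = 1 \<and> a = 2 * k + 2) \<or> {a, b} \<in> Mcan k"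
  unfolding H3_def by (simp add: doubleton_eq_iff; blast)

lemma H3_sub: "H3 k \<subseteq> all2 {0..<2 * k + 3}"
  unfolding H3_def using Mcan_sub[of k "2 * k + 3"] by (simp add: mem_all2)

lemma H2_sub: "insert {0, 1} (H3 k) \<subseteq> all2 {0..<2 * k + 3}"
  using H3_sub by (simp add: mem_all2)

lemma nb3_facts:
  assumes "H3 k \<subseteq> H"
  shows "2 * k + 2 \<in> nb H {0..<2 * k + 3} 0" "2 * k + 2 \<in> nb H {0..<2 * k + 3} 1"
    "0 \<in> nb H {0..<2 * k + 3} (2 * k + 2)" "1 \<in> nb H {0..<2 * k + 3} (2 * k + 2)"
  using assms unfolding nb_mem H3_def by (auto simp: insert_commute)

lemma tau3_nb:
  assumes "2 \<le> x" "x < 2 * k + 2" "H3 k \<subseteq> H"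
  shows "tau x \<in> nb H {0..<2 * k + 3} x"
  using tau_nb[OF assms(1,2), of H "2 * k + 3"] assms unfolding H3_def by auto

lemma big_union3:
  assumes H: "H3 k \<subseteq> H" and uV: "u < 2 * k + 3" and vV: "v < 2 * k + 3" and uv: "u \<noteq> v"
    and nz: "\<not> (u \<le> 1 \<and> v \<le> 1)"
  shows "2 \<le> card (nb H {0..<2 * k + 3} u \<union> nb H {0..<2 * k + 3} v)"
proof -
  define V where "V = {0..<2 * k + 3}"
  define c where "c = 2 * k + 2"
  have fin: "finite (nb H V u \<union> nb H V v)" using finite_nb[of V] V_def by simp
  note F = nb3_facts[OF H, folded V_def c_def]
  have T: "\<And>x. 2 \<le> x \<Longrightarrow> x < c \<Longrightarrow> tau x \<in> nb H V x" using tau3_nb[OF _ _ H] V_def c_def by auto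
  have TP: "\<And>x. 2 \<le> x \<Longrightarrow> x < c \<Longrightarrow> tau x < c" using tau_props(2) c_def by auto
  have cases_u: "u \<le> 1 \<or> u = c \<or> (2 \<le> u \<and> u < c)" using uV c_def by auto
  have cases_v: "v \<le> 1 \<or> v = c \<or> (2 \<le> v \<and> v < c)" using vV c_def by auto
  have "2 \<le> card (nb H V u \<union> nb H V v)" (is ?g)
  proof -
    { assume "u = c" then have ?g using two_in[OF fin, of 0 1] F by auto }
    moreover
    { assume "v = c" then have ?g using two_in[OF fin, of 0 1] F by auto }
    moreover
    { assume a: "2 \<le> u" "u < c" "2 \<le> v" "v < c"
      then have "tau u \<noteq> tau v" using uv tau_inj by blast
      then have ?g using two_in[OF fin, of "tau u" "tau v"] T a by auto }
    moreover
    { assume a: "2 \<le> u" "u < c" "v \<le> 1"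
      then have "v = 0 \<or> v = 1" by auto
      then have "c \<in> nb H V v" using F by auto
      moreover have "tau u \<noteq> c" using TP a by (metis less_irrefl)
      ultimately have ?g using two_in[OF fin, of "tau u" c] T a by auto }
    moreover
    { assume a: "2 \<le> v" "v < c" "u \<le> 1"
      then have "u = 0 \<or> u = 1" by auto
      then have "c \<in> nb H V u" using F by auto
      moreover have "tau v \<noteq> c" using TP a by (metis less_irrefl)
      ultimately have ?g using two_in[OF fin, of "tau v" c] T a by auto }
    ultimately show ?g using cases_u cases_v nz by blast
  qed
  then show ?thesis using V_def by simp
qed

lemma free_H2:
  assumes p: "p = 2 * k" "0 < p"
  shows "copies (book_V p) (book_E p) {0..<p+3} (all2 {0..<p+3} - insert {0, 1} (H3 k)) = {}"
proof (rule ccontr)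
  define V where "V = {0..<p+3}"
  define H where "H = insert {0, 1} (H3 k)"
  have HA: "H \<subseteq> all2 V" unfolding H_def V_def using H2_sub p by simp
  have finV': "finite V" using V_def by simp
  have G: "graph V (all2 V - H)" by (rule compl_graph(1)[OF finV' HA])
  have HH: "H = all2 V - (all2 V - H)" by (rule compl_graph(2)[OF finV' HA, symmetric])
  assume "copies (book_V p) (book_E p) {0..<p+3} (all2 {0..<p+3} - insert {0, 1} (H3 k)) \<noteq> {}"
  then obtain c where "c \<in> copies (book_V p) (book_E p) V (all2 V - H)" unfolding V_def H_def by blast
  then obtain u v S where uv: "u \<in> V" "v \<in> V" "u \<noteq> v" "{u, v} \<notin> H"
     "card (nb H V u \<union> nb H V v) + p + 2 \<le> card V"
    using copy_necessary[OF G HH] by blast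
  have c1: "card (nb H V u \<union> nb H V v) \<le> 1" using uv V_def by simp
  have "\<not> (u \<le> 1 \<and> v \<le> 1)" using uv(3,4) H_def by (auto simp: insert_commute)
  moreover have "H3 k \<subseteq> H" using H_def by auto
  ultimately have "2 \<le> card (nb H V u \<union> nb H V v)" using big_union3[of k H u v] uv V_def p by auto
  then show False using c1 by simp
qed

lemma copies_H3:
  assumes p: "p = 2 * k" "0 < p"
  shows "copies (book_V p) (book_E p) {0..<p+3} (all2 {0..<p+3} - H3 k) =
    {(insert 0 (insert 1 {2..<p+2}), bookshape 0 1 {2..<p+2})}"
proof -
  define V where "V = {0..<p+3}"
  define H where "H = H3 k"
  have HA: "H \<subseteq> all2 V" unfolding H_def V_def using H3_sub p by simp
  have finV': "finite V" using V_def by simp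
  have G: "graph V (all2 V - H)" by (rule compl_graph(1)[OF finV' HA])
  have HH: "H = all2 V - (all2 V - H)" by (rule compl_graph(2)[OF finV' HA, symmetric])
  have finV: "finite V" using V_def by simp
  have n01: "{0, 1} \<notin> H" unfolding H_def by (simp add: mem_H3 mem_Mcan)
  have S0: "{2..<p+2} \<subseteq> V - {0, 1} - (nb H V 0 \<union> nb H V 1)"
    using p unfolding V_def nb_def H_def by (auto simp: mem_H3 mem_Mcan)
  have cS0: "card {2..<p+2} = p" by simp
  have in1: "(insert 0 (insert 1 {2..<p+2}), bookshape 0 1 {2..<p+2}) \<in> copies (book_V p) (book_E p) V (all2 V - H)"
    using copy_from_pair[OF G HH _ _ _ n01 S0 cS0] V_def by simp
  have sub: "copies (book_V p) (book_E p) V (all2 V - H) \<subseteq> {(insert 0 (insert 1 {2..<p+2}), bookshape 0 1 {2..<p+2})}"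
  proof
    fix c assume "c \<in> copies (book_V p) (book_E p) V (all2 V - H)"
    then obtain u v S where uv: "u \<in> V" "v \<in> V" "u \<noteq> v" "S \<subseteq> V - {u, v}" "card S = p"
     "S \<inter> (nb H V u \<union> nb H V v) = {}"
     "card (nb H V u \<union> nb H V v) + p + 2 \<le> card V" "c = (insert u (insert v S), bookshape u v S)"
      using copy_necessary[OF G HH] by blast
    have c1: "card (nb H V u \<union> nb H V v) \<le> 1" using uv V_def by simp
    have "u \<le> 1 \<and> v \<le> 1"
    proof (rule ccontr)
      assume "\<not> (u \<le> 1 \<and> v \<le> 1)"
      then have "2 \<le> card (nb H V u \<union> nb H V v)" using big_union3[of k H u v] uv V_def p H_def by auto
      then show False using c1 by simp
    qed
    then have uv01: "(u = 0 \<and> v = 1) \<or> (u = 1 \<and> v = 0)" using uv(3) by auto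
    have "p + 2 \<in> nb H V 0" "p + 2 \<in> nb H V 1" using nb3_facts[of k H] p V_def H_def by auto
    then have "p + 2 \<notin> S" using uv(6) uv01 by auto
    have "S \<subseteq> {2..<p+2}"
    proof
      fix x assume x: "x \<in> S"
      then have "x < p + 3" "x \<noteq> 0" "x \<noteq> 1" "x \<noteq> p + 2"
        using uv(4) uv01 V_def \<open>p + 2 \<notin> S\<close> by auto
      then show "x \<in> {2..<p+2}" by auto
    qed
    then have SS: "S = {2..<p+2}" using uv(5) by (intro card_subset_eq) auto
    show "c \<in> {(insert 0 (insert 1 {2..<p+2}), bookshape 0 1 {2..<p+2})}"
      using uv01 uv(8) SS bookshape_sym[of 1 0 "{2..<p+2}"] by (auto simp: insert_commute)
  qed
  show ?thesis using sub in1 unfolding V_def H_def by blast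
qed


lemma bij_upd:
  assumes "bij_betw g U T" "u \<notin> U" "a \<notin> T"
  shows "bij_betw (g(u := a)) (insert u U) (insert a T)"
proof -
  have "bij_betw (g(u := a)) U T" using assms(1) assms(2) by (metis bij_betw_cong fun_upd_other)
  then have "bij_betw (g(u := a)) (U \<union> {u}) (T \<union> {(g(u := a)) u})"
    using notIn_Un_bij_betw3[of u U "g(u := a)" T] assms by simp
  then show ?thesis by simp
qed

lemma iso_compl:
  assumes G: "graph V E" and H: "H = all2 V - E" and H': "H' \<subseteq> all2 V'"
    and f: "bij_betw f V V'" and e: "\<forall>x\<in>V. \<forall>y\<in>V. {x, y} \<in> H \<longleftrightarrow> {f x, f y} \<in> H'"
  shows "graph_iso V E V' (all2 V' - H')"
  unfolding graph_iso_def
proof (intro exI conjI ballI)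
  show "bij_betw f V V'" by fact
  fix x y assume x: "x \<in> V" and y: "y \<in> V"
  have EA: "E \<subseteq> all2 V" using G by (simp add: graph_all2)
  have fx: "f x \<in> V'" "f y \<in> V'" using f x y bij_betwE by blast+
  show "{x, y} \<in> E \<longleftrightarrow> {f x, f y} \<in> all2 V' - H'"
  proof (cases "x = y")
    case True
    have "{x} \<notin> E" using subsetD[OF EA] single_notin_all2[of x V] by metis
    moreover have "{f x} \<notin> all2 V' - H'" using single_notin_all2[of "f x" V'] by simp
    ultimately show ?thesis using True by simp
  next
    case False
    then have "f x \<noteq> f y" using f x y unfolding bij_betw_def inj_on_def by blast
    then have "{f x, f y} \<in> all2 V'" using fx by (simp add: mem_all2)
    moreover have "{x, y} \<in> all2 V" using x y False by (simp add: mem_all2)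
    ultimately show ?thesis using e x y H by blast
  qed
qed

lemma iso_trans:
  assumes "graph_iso A EA C EC" "graph_iso B EB C EC"
  shows "graph_iso A EA B EB"
proof -
  obtain f where f: "bij_betw f A C" "\<forall>x\<in>A. \<forall>y\<in>A. {x, y} \<in> EA \<longleftrightarrow> {f x, f y} \<in> EC"
    using assms(1) unfolding graph_iso_def by blast
  obtain g where g: "bij_betw g B C" "\<forall>x\<in>B. \<forall>y\<in>B. {x, y} \<in> EB \<longleftrightarrow> {g x, g y} \<in> EC"
    using assms(2) unfolding graph_iso_def by blast
  define h where "h = inv_into B g \<circ> f"
  have hb: "bij_betw h A B" unfolding h_def using f(1) bij_betw_inv_into[OF g(1)] by (rule bij_betw_trans)
  have "\<forall>x\<in>A. \<forall>y\<in>A. {x, y} \<in> EA \<longleftrightarrow> {h x, h y} \<in> EB"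
  proof (intro ballI)
    fix x y assume x: "x \<in> A" and y: "y \<in> A"
    have fx: "f x \<in> C" "f y \<in> C" using f(1) x y bij_betwE by blast+
    have hx: "h x \<in> B" "h y \<in> B" using hb x y bij_betwE by blast+
    have gh: "g (h x) = f x" "g (h y) = f y" unfolding h_def using fx g(1)
      by (simp_all add: bij_betw_inv_into_right)
    show "{x, y} \<in> EA \<longleftrightarrow> {h x, h y} \<in> EB" using f(2) g(2) x y hx gh by metis
  qed
  then show ?thesis unfolding graph_iso_def using hb by blast
qed

lemma ex_finite:
  fixes n :: nat shows "finite {card E | E. graph {0..<n} E \<and> copies VH EH {0..<n} E = {}}"
proof -
  have "{card E | E. graph {0..<n} E \<and> copies VH EH {0..<n} E = {}} \<subseteq> card ` Pow (all2 {0..<n})"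
    by (auto simp: graph_all2)
  moreover have "finite (all2 {0..<n})" by (rule finite_all2) simp
  then have "finite (card ` Pow (all2 {0..<n}))" by simp
  ultimately show ?thesis by (rule finite_subset)
qed

lemma card_H0: "card (insert {0, 2} (Mcan k)) = k + 1"
proof -
  have "{0, 2} \<notin> Mcan k" by (simp add: mem_Mcan)
  then show ?thesis using card_Mcan by (simp add: Mcan_def)
qed

lemma card_H3: "card (H3 k) = k + 2"
proof -
  have "{0, 2 * k + 2} \<notin> insert {1, 2 * k + 2} (Mcan k)" by (simp add: mem_Mcan doubleton_eq_iff)
  moreover have "{1, 2 * k + 2} \<notin> Mcan k" by (simp add: mem_Mcan)
  ultimately show ?thesis unfolding H3_def using card_Mcan by (simp add: Mcan_def)
qed

lemma card_H2: "card (insert {0, 1} (H3 k)) = k + 3"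
proof -
  have "{0, 1} \<notin> H3 k" by (simp add: mem_H3 mem_Mcan)
  moreover have "finite (H3 k)" unfolding H3_def Mcan_def by simp
  ultimately show ?thesis using card_H3 by simp
qed

lemma ex2:
  assumes p: "p = 2 * k" "0 < p"
  shows "ex (p + 2) (book_V p) (book_E p) = ((p + 2) choose 2) - (k + 1)"
    and "k + 1 \<le> (p + 2) choose 2"
proof -
  define V where "V = {0..<p+2}"
  define H0 where "H0 = insert {0, 2} (Mcan k)"
  have finV: "finite V" using V_def by simp
  have HA: "H0 \<subseteq> all2 V" unfolding H0_def V_def using Mcan_sub[of k "p+2"] p by (simp add: mem_all2)
  have c0: "card (all2 V - H0) = ((p + 2) choose 2) - (k + 1)"
    using compl_graph(3)[OF finV HA] card_H0 H0_def V_def by simp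
  have g0: "graph V (all2 V - H0)" by (rule compl_graph(1)[OF finV HA])
  have "card H0 \<le> card (all2 V)" using HA finV by (simp add: card_mono finite_all2)
  then show "k + 1 \<le> (p + 2) choose 2" using card_all2[OF finV] card_H0 H0_def V_def by simp
  show "ex (p + 2) (book_V p) (book_E p) = ((p + 2) choose 2) - (k + 1)"
    unfolding ex_def
  proof (rule Max_eqI[OF ex_finite])
    fix y assume "y \<in> {card E | E. graph {0..<p+2} E \<and> copies (book_V p) (book_E p) {0..<p+2} E = {}}"
    then obtain E where E: "y = card E" "graph {0..<p+2} E" "copies (book_V p) (book_E p) {0..<p+2} E = {}"
      by blast
    have "k + 1 \<le> card (all2 {0..<p+2} - E)" using free_bound2[OF E(2) refl _ p(1) E(3)] by simp
    then show "y \<le> ((p + 2) choose 2) - (k + 1)" using card_E_H[OF E(2)] E(1) by simp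
  next
    show "((p + 2) choose 2) - (k + 1) \<in> {card E | E. graph {0..<p+2} E \<and> copies (book_V p) (book_E p) {0..<p+2} E = {}}"
    proof -
      have "((p + 2) choose 2) - (k + 1) = card (all2 V - H0) \<and> graph {0..<p+2} (all2 V - H0) \<and>
          copies (book_V p) (book_E p) {0..<p+2} (all2 V - H0) = {}"
        using c0 g0 free_H0[OF p] unfolding V_def H0_def by simp
      then show ?thesis by blast
    qed
  qed
qed

lemma ex3:
  assumes p: "p = 2 * k" "0 < p"
  shows "ex (p + 3) (book_V p) (book_E p) = ((p + 3) choose 2) - (k + 3)"
    and "k + 3 \<le> (p + 3) choose 2"
proof -
  define V where "V = {0..<p+3}"
  define H0 where "H0 = insert {0, 1} (H3 k)"
  have finV: "finite V" using V_def by simp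
  have HA: "H0 \<subseteq> all2 V" unfolding H0_def V_def using H2_sub p by simp
  have c0: "card (all2 V - H0) = ((p + 3) choose 2) - (k + 3)"
    using compl_graph(3)[OF finV HA] card_H2 H0_def V_def by simp
  have g0: "graph V (all2 V - H0)" by (rule compl_graph(1)[OF finV HA])
  have "card H0 \<le> card (all2 V)" using HA finV by (simp add: card_mono finite_all2)
  then show "k + 3 \<le> (p + 3) choose 2" using card_all2[OF finV] card_H2 H0_def V_def by simp
  show "ex (p + 3) (book_V p) (book_E p) = ((p + 3) choose 2) - (k + 3)"
    unfolding ex_def
  proof (rule Max_eqI[OF ex_finite])
    fix y assume "y \<in> {card E | E. graph {0..<p+3} E \<and> copies (book_V p) (book_E p) {0..<p+3} E = {}}"
    then obtain E where E: "y = card E" "graph {0..<p+3} E" "copies (book_V p) (book_E p) {0..<p+3} E = {}"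
      by blast
    have "k + 3 \<le> card (all2 {0..<p+3} - E)" using free_bound3[OF E(2) refl _ p(1) p(2) E(3)] by simp
    then show "y \<le> ((p + 3) choose 2) - (k + 3)" using card_E_H[OF E(2)] E(1) by simp
  next
    show "((p + 3) choose 2) - (k + 3) \<in> {card E | E. graph {0..<p+3} E \<and> copies (book_V p) (book_E p) {0..<p+3} E = {}}"
    proof -
      have "((p + 3) choose 2) - (k + 3) = card (all2 V - H0) \<and> graph {0..<p+3} (all2 V - H0) \<and>
          copies (book_V p) (book_E p) {0..<p+3} (all2 V - H0) = {}"
        using c0 g0 free_H2[OF p] unfolding V_def H0_def by simp
      then show ?thesis by blast
    qed
  qed
qed


lemma sigma_props:
  assumes HA: "H \<subseteq> all2 V" and U: "U \<subseteq> V"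
    and one: "\<forall>y\<in>U. card (nb H V y) = 1"
    and closed: "\<forall>y\<in>U. \<forall>z\<in>nb H V y. z \<in> U"
    and \<sigma>_def: "\<sigma> = (\<lambda>y. THE z. nb H V y = {z})"
  shows "\<forall>y\<in>U. nb H V y = {\<sigma> y} \<and> \<sigma> y \<in> U \<and> \<sigma> y \<noteq> y \<and> \<sigma> (\<sigma> y) = y"
proof -
  have sg: "\<And>y. y \<in> U \<Longrightarrow> nb H V y = {\<sigma> y}"
  proof -
    fix y assume y: "y \<in> U"
    then obtain z where z: "nb H V y = {z}" using one card_1_singleton_iff by (metis One_nat_def)
    then have "\<sigma> y = z" unfolding \<sigma>_def by (rule the_equality) (use z in auto)
    then show "nb H V y = {\<sigma> y}" using z by simp
  qed
  show ?thesis
  proof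
    fix y assume y: "y \<in> U"
    have s1: "\<sigma> y \<in> nb H V y" using sg[OF y] by simp
    have s2: "\<sigma> y \<in> U" using closed y s1 by blast
    have s3: "\<sigma> y \<noteq> y" using s1 nb_sub[OF HA, of y] by auto
    have "y \<in> nb H V (\<sigma> y)" using nb_sym[OF s1] y U by auto
    then have s4: "\<sigma> (\<sigma> y) = y" using sg[OF s2] by simp
    show "nb H V y = {\<sigma> y} \<and> \<sigma> y \<in> U \<and> \<sigma> y \<noteq> y \<and> \<sigma> (\<sigma> y) = y" using sg[OF y] s2 s3 s4 by blast
  qed
qed

lemma canon2:
  assumes ext: "extremal_one_book p (p + 2) V E" and p: "p = 2 * k" "0 < p"
  shows "graph_iso V E {0..<p+2} (all2 {0..<p+2} - Mcan k)"
proof -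
  define H where "H = all2 V - E"
  have G: "graph V E" and cV: "card V = p + 2" and cE: "card E = ex (p + 2) (book_V p) (book_E p) + 1"
    and c1: "card (copies (book_V p) (book_E p) V E) = 1"
    using ext unfolding extremal_one_book_def num_copies_def by auto
  have finV: "finite V" using G by (simp add: graph_def)
  have HA: "H \<subseteq> all2 V" using H_def by blast
  have "card H \<le> card V choose 2" using card_mono[OF finite_all2[OF finV] HA] card_all2[OF finV] by simp
  then have cH: "card H = k" using card_E_H[OF G] cE ex2[OF p] cV H_def by simp
  obtain u v where uv: "u \<in> V" "v \<in> V" "u \<noteq> v" "nb H V u = {}" "nb H V v = {}"
      "\<forall>y\<in>V - {u, v}. card (nb H V y) = 1"
    using uniq2[OF G H_def cV p(1) p(2) cH c1] by blast
  define U where "U = V - {u, v}"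
  have UV: "U \<subseteq> V" using U_def by auto
  have closed: "\<And>y z. y \<in> U \<Longrightarrow> z \<in> nb H V y \<Longrightarrow> z \<in> U"
  proof -
    fix y z assume y: "y \<in> U" and z: "z \<in> nb H V y"
    have "y \<in> nb H V z" using nb_sym[OF z] y UV by auto
    then have "z \<noteq> u" "z \<noteq> v" using uv by auto
    then show "z \<in> U" using z U_def unfolding nb_def by auto
  qed
  define \<sigma> where "\<sigma> = (\<lambda>y. THE z. nb H V y = {z})"
  have sp: "\<forall>y\<in>U. nb H V y = {\<sigma> y} \<and> \<sigma> y \<in> U \<and> \<sigma> y \<noteq> y \<and> \<sigma> (\<sigma> y) = y"
    using sigma_props[OF HA UV _ _ \<sigma>_def] uv(6) U_def closed by blast
  have cU: "card U = 2 * k" using cV uv finV p unfolding U_def by (simp add: card_Diff_subset)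
  obtain g where g: "bij_betw g U {2..<2 * k + 2}" "\<forall>y\<in>U. g (\<sigma> y) = tau (g y)"
    using match_iso[of U k \<sigma>] cU sp finV UV finite_subset by blast
  have gr: "\<And>y. y \<in> U \<Longrightarrow> 2 \<le> g y \<and> g y < 2 * k + 2" using g(1) bij_betwE by fastforce
  have gi: "inj_on g U" using g(1) bij_betw_def by blast
  define f where "f = (g(v := 1))(u := 0)"
  have fv: "f u = 0" "f v = 1" "\<And>y. y \<in> U \<Longrightarrow> f y = g y" unfolding f_def U_def using uv by auto
  have bf: "bij_betw f V {0..<p+2}"
  proof -
    have b1: "bij_betw (g(v := 1)) (insert v U) (insert 1 {2..<2 * k + 2})"
      by (rule bij_upd[OF g(1)]) (auto simp: U_def)
    have b2: "bij_betw f (insert u (insert v U)) (insert 0 (insert 1 {2..<2 * k + 2}))"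
      unfolding f_def by (rule bij_upd[OF b1]) (auto simp: U_def uv)
    have "insert u (insert v U) = V" using U_def uv by auto
    moreover have "insert 0 (insert 1 {2..<2 * k + 2}) = {0..<p+2}" using p by auto
    ultimately show ?thesis using b2 by simp
  qed
  have e: "\<forall>x\<in>V. \<forall>y\<in>V. {x, y} \<in> H \<longleftrightarrow> {f x, f y} \<in> Mcan k"
  proof (intro ballI)
    fix x y assume x: "x \<in> V" and y: "y \<in> V"
    have L: "{x, y} \<in> H \<longleftrightarrow> y \<in> nb H V x" using y by (simp add: nb_mem)
    have L': "{x, y} \<in> H \<longleftrightarrow> x \<in> nb H V y" using x by (simp add: nb_mem insert_commute)
    show "{x, y} \<in> H \<longleftrightarrow> {f x, f y} \<in> Mcan k"
    proof (cases "x \<in> U")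
      case xU: True
      show ?thesis
      proof (cases "y \<in> U")
        case yU: True
        have "{x, y} \<in> H \<longleftrightarrow> y = \<sigma> x" using L sp xU by auto
        also have "\<dots> \<longleftrightarrow> g y = g (\<sigma> x)" using gi xU yU sp inj_on_eq_iff by metis
        also have "\<dots> \<longleftrightarrow> {f x, f y} \<in> Mcan k" using g(2) xU yU gr fv by (simp add: mem_Mcan)
        finally show ?thesis .
      next
        case yU: False
        then have "y = u \<or> y = v" using y U_def by auto
        then show ?thesis using L' uv fv by (auto simp: mem_Mcan)
      qed
    next
      case xU: False
      then have "x = u \<or> x = v" using x U_def by auto
      then show ?thesis using L uv fv by (auto simp: mem_Mcan)
    qed
  qed
  show ?thesis using iso_compl[OF G H_def Mcan_sub[of k "p+2"] bf e] p by simp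
qed


lemma canon3:
  assumes ext: "extremal_one_book p (p + 3) V E" and p: "p = 2 * k" "0 < p"
  shows "graph_iso V E {0..<p+3} (all2 {0..<p+3} - H3 k)"
proof -
  define H where "H = all2 V - E"
  have G: "graph V E" and cV: "card V = p + 3" and cE: "card E = ex (p + 3) (book_V p) (book_E p) + 1"
    and c1: "card (copies (book_V p) (book_E p) V E) = 1"
    using ext unfolding extremal_one_book_def num_copies_def by auto
  have finV: "finite V" using G by (simp add: graph_def)
  have HA: "H \<subseteq> all2 V" using H_def by blast
  have "card H \<le> card V choose 2" using card_mono[OF finite_all2[OF finV] HA] card_all2[OF finV] by simp
  then have cH: "card H = k + 2" using card_E_H[OF G] cE ex3[OF p] cV H_def by simp
  obtain x a c where xac: "x \<in> V" "a \<in> V" "c \<in> V" "a \<noteq> c" "x \<noteq> a" "x \<noteq> c"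
      "nb H V x = {a, c}" "nb H V a = {x}" "nb H V c = {x}" "\<forall>y\<in>V - {x, a, c}. card (nb H V y) = 1"
    using uniq3[OF G H_def cV p(1) p(2) cH c1] by blast
  define U where "U = V - {x, a, c}"
  have UV: "U \<subseteq> V" using U_def by auto
  have closed: "\<forall>y\<in>U. \<forall>z\<in>nb H V y. z \<in> U"
  proof (intro ballI)
    fix y z assume y: "y \<in> U" and z: "z \<in> nb H V y"
    have "y \<in> nb H V z" using nb_sym[OF z] y UV by auto
    then have "z \<noteq> x" "z \<noteq> a" "z \<noteq> c" using xac y U_def by auto
    then show "z \<in> U" using z U_def unfolding nb_def by auto
  qed
  define \<sigma> where "\<sigma> = (\<lambda>y. THE z. nb H V y = {z})"
  have sp: "\<forall>y\<in>U. nb H V y = {\<sigma> y} \<and> \<sigma> y \<in> U \<and> \<sigma> y \<noteq> y \<and> \<sigma> (\<sigma> y) = y"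
    using sigma_props[OF HA UV _ _ \<sigma>_def] xac(10) U_def closed by blast
  have "card {x, a, c} = 3" using xac by simp
  then have cU: "card U = 2 * k" using cV xac finV p unfolding U_def by (simp add: card_Diff_subset)
  obtain g where g: "bij_betw g U {2..<2 * k + 2}" "\<forall>y\<in>U. g (\<sigma> y) = tau (g y)"
    using match_iso[of U k \<sigma>] cU sp finV UV finite_subset by blast
  have gr: "\<And>y. y \<in> U \<Longrightarrow> 2 \<le> g y \<and> g y < 2 * k + 2" using g(1) bij_betwE by fastforce
  have gi: "inj_on g U" using g(1) bij_betw_def by blast
  define C where "C = 2 * k + 2"
  define f where "f = ((g(c := 1))(a := 0))(x := C)"
  have fv: "f x = C" "f a = 0" "f c = 1" "\<And>y. y \<in> U \<Longrightarrow> f y = g y" unfolding f_def U_def using xac by auto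
  have bf: "bij_betw f V {0..<p+3}"
  proof -
    have b1: "bij_betw (g(c := 1)) (insert c U) (insert 1 {2..<2 * k + 2})"
      by (rule bij_upd[OF g(1)]) (auto simp: U_def)
    have b2: "bij_betw ((g(c := 1))(a := 0)) (insert a (insert c U)) (insert 0 (insert 1 {2..<2 * k + 2}))"
      by (rule bij_upd[OF b1]) (auto simp: U_def xac)
    have b3: "bij_betw f (insert x (insert a (insert c U))) (insert C (insert 0 (insert 1 {2..<2 * k + 2})))"
      unfolding f_def by (rule bij_upd[OF b2]) (auto simp: U_def xac C_def)
    have "insert x (insert a (insert c U)) = V" using U_def xac by auto
    moreover have "insert C (insert 0 (insert 1 {2..<2 * k + 2})) = {0..<p+3}" using p C_def by auto
    ultimately show ?thesis using b3 by simp
  qed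
  have e: "\<forall>z\<in>V. \<forall>w\<in>V. {z, w} \<in> H \<longleftrightarrow> {f z, f w} \<in> H3 k"
  proof (intro ballI)
    fix z w assume z: "z \<in> V" and w: "w \<in> V"
    have L: "{z, w} \<in> H \<longleftrightarrow> w \<in> nb H V z" using w by (simp add: nb_mem)
    have L': "{z, w} \<in> H \<longleftrightarrow> z \<in> nb H V w" using z by (simp add: nb_mem insert_commute)
    have z4: "z = x \<or> z = a \<or> z = c \<or> z \<in> U" and w4: "w = x \<or> w = a \<or> w = c \<or> w \<in> U"
      using z w U_def by auto
    have fw: "f w = C \<longleftrightarrow> w = x" "f w = 0 \<longleftrightarrow> w = a" "f w = 1 \<longleftrightarrow> w = c"
      using w4 fv gr[of w] xac C_def by auto
    have fz: "f z = C \<longleftrightarrow> z = x" "f z = 0 \<longleftrightarrow> z = a" "f z = 1 \<longleftrightarrow> z = c"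
      using z4 fv gr[of z] xac C_def by auto
    have Cn: "C \<noteq> 0" "C \<noteq> 1" using C_def by auto
    show "{z, w} \<in> H \<longleftrightarrow> {f z, f w} \<in> H3 k"
    proof (cases "z \<in> U")
      case zU: True
      show ?thesis
      proof (cases "w \<in> U")
        case wU: True
        have "{z, w} \<in> H \<longleftrightarrow> w = \<sigma> z" using L sp zU by auto
        also have "\<dots> \<longleftrightarrow> g w = g (\<sigma> z)" using gi zU wU sp inj_on_eq_iff by metis
        also have "\<dots> \<longleftrightarrow> {f z, f w} \<in> H3 k" using g(2) zU wU gr[of z] gr[of w] fv C_def
          by (auto simp: mem_H3 mem_Mcan)
        finally show ?thesis .
      next
        case wU: False
        then have w3: "w = x \<or> w = a \<or> w = c" using w4 by auto
        have "\<not> {z, w} \<in> H" using L' w3 xac zU U_def by auto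
        moreover have "\<not> {f z, f w} \<in> H3 k" using w3 fv gr[OF zU] C_def zU by (auto simp: mem_H3 mem_Mcan)
        ultimately show ?thesis by simp
      qed
    next
      case zU: False
      then have z3: "z = x \<or> z = a \<or> z = c" using z4 by auto
      have "{z, w} \<in> H \<longleftrightarrow> (z = x \<and> (w = a \<or> w = c)) \<or> ((z = a \<or> z = c) \<and> w = x)"
        using L z3 xac by auto
      also have "\<dots> \<longleftrightarrow> {f z, f w} \<in> H3 k"
        using z3 fv fw Cn C_def xac by (auto simp: mem_H3 mem_Mcan)
      finally show ?thesis .
    qed
  qed
  have "H3 k \<subseteq> all2 {0..<p+3}" using H3_sub p by simp
  then show ?thesis using iso_compl[OF G H_def _ bf e] by simp
qed

theorem theorem2:
  fixes p :: nat
  assumes "p > 0" and "even p"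
  shows "\<forall>n \<in> {p + 2, p + 3}.
           (\<exists>(V :: nat set) E. extremal_one_book p n V E) \<and>
           (\<forall>(V1 :: nat set) E1 (V2 :: nat set) E2.
              extremal_one_book p n V1 E1 \<and> extremal_one_book p n V2 E2 \<longrightarrow>
              graph_iso V1 E1 V2 E2)"
proof -
  obtain k where pk: "p = 2 * k" using assms(2) by (auto elim: evenE)
  note p = pk assms(1)
  have A: "(\<exists>(V :: nat set) E. extremal_one_book p (p + 2) V E) \<and>
           (\<forall>(V1 :: nat set) E1 (V2 :: nat set) E2.
              extremal_one_book p (p + 2) V1 E1 \<and> extremal_one_book p (p + 2) V2 E2 \<longrightarrow>
              graph_iso V1 E1 V2 E2)"
  proof
    define V where "V = {0..<p+2}"
    have finV: "finite V" using V_def by simp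
    have HA: "Mcan k \<subseteq> all2 V" using Mcan_sub[of k "p+2"] p V_def by simp
    have "extremal_one_book p (p + 2) V (all2 V - Mcan k)"
      unfolding extremal_one_book_def num_copies_def
    proof (intro conjI)
      show "graph V (all2 V - Mcan k)" by (rule compl_graph(1)[OF finV HA])
      show "card V = p + 2" using V_def by simp
      show "card (all2 V - Mcan k) = ex (p + 2) (book_V p) (book_E p) + 1"
        using compl_graph(3)[OF finV HA] card_Mcan ex2[OF p] V_def by simp
      show "card (copies (book_V p) (book_E p) V (all2 V - Mcan k)) = 1"
        using copies_H1[OF p] V_def by simp
    qed
    then show "\<exists>(V :: nat set) E. extremal_one_book p (p + 2) V E" by blast
    show "\<forall>(V1 :: nat set) E1 (V2 :: nat set) E2.
              extremal_one_book p (p + 2) V1 E1 \<and> extremal_one_book p (p + 2) V2 E2 \<longrightarrow>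
              graph_iso V1 E1 V2 E2"
      using canon2[OF _ p] iso_trans by blast
  qed
  have B: "(\<exists>(V :: nat set) E. extremal_one_book p (p + 3) V E) \<and>
           (\<forall>(V1 :: nat set) E1 (V2 :: nat set) E2.
              extremal_one_book p (p + 3) V1 E1 \<and> extremal_one_book p (p + 3) V2 E2 \<longrightarrow>
              graph_iso V1 E1 V2 E2)"
  proof
    define V where "V = {0..<p+3}"
    have finV: "finite V" using V_def by simp
    have HA: "H3 k \<subseteq> all2 V" using H3_sub p V_def by simp
    have "extremal_one_book p (p + 3) V (all2 V - H3 k)"
      unfolding extremal_one_book_def num_copies_def
    proof (intro conjI)
      show "graph V (all2 V - H3 k)" by (rule compl_graph(1)[OF finV HA])
      show "card V = p + 3" using V_def by simp
      show "card (all2 V - H3 k) = ex (p + 3) (book_V p) (book_E p) + 1"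
        using compl_graph(3)[OF finV HA] card_H3 ex3[OF p] V_def by simp
      show "card (copies (book_V p) (book_E p) V (all2 V - H3 k)) = 1"
        using copies_H3[OF p] V_def by simp
    qed
    then show "\<exists>(V :: nat set) E. extremal_one_book p (p + 3) V E" by blast
    show "\<forall>(V1 :: nat set) E1 (V2 :: nat set) E2.
              extremal_one_book p (p + 3) V1 E1 \<and> extremal_one_book p (p + 3) V2 E2 \<longrightarrow>
              graph_iso V1 E1 V2 E2"
      using canon3[OF _ p] iso_trans by blast
  qed
  show ?thesis using A B by simp
qed


end
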